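(* For a word $u$ of length $n$, the seed array $\mathsf{Seed}[1..n]$, where $\mathsf{Seed}[i]$ is the length of the shortest seed of the prefix $u[1..i]$, can be computed in $O(n^2)$ time.
   Context: Words are over a finite alphabet. A word $s$ covers $w$ if every position of $w$ lies in some occurrence of $s$ as a factor of $w$. A seed of a word $x$ is a factor $s$ of $x$ such that $x$ is a factor of some word covered by $s$. *)

theory Defs
  imports Main "HOL-Library.Sublist"
begin

text \<open>Positions are 0-based here; an occurrence of s in w starts at position i.\<close>

definition occurs_at :: "'a list \<Rightarrow> 'a list \<Rightarrow> nat \<Rightarrow> bool" where
  "occurs_at s w i \<longleftrightarrow> i + length s \<le> length w \<and> take (length s) (drop i w) = s"

definition covers :: "'a list \<Rightarrow> 'a list \<Rightarrow> bool" where
  "covers s w \<longleftrightarrow> (\<forall>j < length w. \<exists>i. occurs_at s w i \<and> i \<le> j \<and> j < i + length s)"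

definition is_seed :: "'a list \<Rightarrow> 'a list \<Rightarrow> bool" where
  "is_seed s x \<longleftrightarrow> sublist s x \<and> (\<exists>w. covers s w \<and> sublist x w)"

definition shortest_seed_len :: "'a list \<Rightarrow> nat" where
  "shortest_seed_len x = (LEAST l. \<exists>s. length s = l \<and> is_seed s x)"

definition seed_array :: "'a list \<Rightarrow> nat \<Rightarrow> nat" where
  "seed_array u i = shortest_seed_len (take i u)"

type_synonym vname = string
type_synonym aname = string

datatype aexp =
    N int
  | V vname
  | Arr aname aexp
  | Plus aexp aexp
  | Minus aexp aexp

datatype bexp =
    Bc bool
  | Not bexp
  | And bexp bexp
  | Less aexp aexp
  | Eq aexp aexp

datatype com =
    SKIP
  | Assign vname aexp
  | ArrAssign aname aexp aexp
  | Seq com com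
  | If bexp com com
  | While bexp com

record state =
  vars :: "vname \<Rightarrow> int"
  arrs :: "aname \<Rightarrow> int \<Rightarrow> int"

fun aval :: "aexp \<Rightarrow> state \<Rightarrow> int" where
  "aval (N k) s = k"
| "aval (V x) s = vars s x"
| "aval (Arr a e) s = arrs s a (aval e s)"
| "aval (Plus e1 e2) s = aval e1 s + aval e2 s"
| "aval (Minus e1 e2) s = aval e1 s - aval e2 s"

fun bval :: "bexp \<Rightarrow> state \<Rightarrow> bool" where
  "bval (Bc b) s = b"
| "bval (Not b) s = (\<not> bval b s)"
| "bval (And b1 b2) s = (bval b1 s \<and> bval b2 s)"
| "bval (Less e1 e2) s = (aval e1 s < aval e2 s)"
| "bval (Eq e1 e2) s = (aval e1 s = aval e2 s)"

text \<open>Big-step semantics with running time: every atomic command and every test costs one unit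
  (expressions are of constant size for a fixed program).\<close>
inductive big_step :: "com \<Rightarrow> state \<Rightarrow> nat \<Rightarrow> state \<Rightarrow> bool" where
  Skip: "big_step SKIP s 1 s"
| Assign: "big_step (Assign x e) s 1 (s\<lparr>vars := (vars s)(x := aval e s)\<rparr>)"
| ArrAssign: "big_step (ArrAssign a i e) s 1
     (s\<lparr>arrs := (arrs s)(a := (arrs s a)(aval i s := aval e s))\<rparr>)"
| Seq: "big_step c1 s1 t1 s2 \<Longrightarrow> big_step c2 s2 t2 s3 \<Longrightarrow> big_step (Seq c1 c2) s1 (t1 + t2) s3"
| IfTrue: "bval b s \<Longrightarrow> big_step c1 s t s' \<Longrightarrow> big_step (If b c1 c2) s (t + 1) s'"
| IfFalse: "\<not> bval b s \<Longrightarrow> big_step c2 s t s' \<Longrightarrow> big_step (If b c1 c2) s (t + 1) s'"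
| WhileFalse: "\<not> bval b s \<Longrightarrow> big_step (While b c) s 1 s"
| WhileTrue: "bval b s1 \<Longrightarrow> big_step c s1 t1 s2 \<Longrightarrow> big_step (While b c) s2 t2 s3 \<Longrightarrow>
     big_step (While b c) s1 (t1 + t2 + 1) s3"

text \<open>Initial configuration for input word u (letters are integers): register ''n'' holds |u|,
  array ''u'' holds u[1..n] at indices 1..n; everything else is 0.\<close>
definition init_state :: "int list \<Rightarrow> state" where
  "init_state u = \<lparr>vars = (\<lambda>_. 0)(''n'' := int (length u)),
     arrs = (\<lambda>_ _. 0)(''u'' := (\<lambda>i. if 1 \<le> i \<and> i \<le> int (length u) then u ! nat (i - 1) else 0))\<rparr>"

end

theory Submission
  imports Defs
begin

function lcpf :: "'a list \<Rightarrow> nat \<Rightarrow> nat \<Rightarrow> nat" where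
  "lcpf u a b = (if a < length u \<and> b < length u \<and> u!a = u!b then Suc (lcpf u (Suc a) (Suc b)) else 0)"
  by pat_completeness auto
termination by (relation "measure (\<lambda>(u,a,b). length u - a)") auto

declare lcpf.simps[simp del]

lemma lcp_ge: "m \<le> lcpf u a b \<longleftrightarrow> (\<forall>t<m. a+t < length u \<and> b+t < length u \<and> u!(a+t) = u!(b+t))"
proof (induction m arbitrary: a b)
  case 0 then show ?case by simp
next
  case (Suc m)
  show ?case
  proof (cases "a < length u \<and> b < length u \<and> u!a = u!b")
    case True
    then have e: "lcpf u a b = Suc (lcpf u (Suc a) (Suc b))" by (simp add: lcpf.simps)
    have "(\<forall>t<Suc m. a+t < length u \<and> b+t < length u \<and> u!(a+t) = u!(b+t)) \<longleftrightarrow>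
          (\<forall>t<m. Suc a+t < length u \<and> Suc b+t < length u \<and> u!(Suc a+t) = u!(Suc b+t))"
      using True by (auto simp: less_Suc_eq_0_disj)
    then show ?thesis using e Suc.IH by simp
  next
    case False
    then have "lcpf u a b = 0" by (simp add: lcpf.simps)
    moreover have "\<not> (\<forall>t<Suc m. a+t < length u \<and> b+t < length u \<and> u!(a+t) = u!(b+t))"
      using False by (metis add_0_right zero_less_Suc)
    ultimately show ?thesis by simp
  qed
qed

lemma lcp_le_len: "lcpf u a b \<le> length u - b"
proof -
  have "\<forall>t<lcpf u a b. b+t < length u" using lcp_ge[of "lcpf u a b" u a b] by simp
  then show ?thesis
    by (cases "lcpf u a b") auto
qed

lemma lcp_simps:
  "lcpf u a b = (if a < length u \<and> b < length u \<and> u!a = u!b then Suc (lcpf u (Suc a) (Suc b)) else 0)"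
  by (simp add: lcpf.simps)

section \<open>Seed characterization\<close>

definition good :: "'a list \<Rightarrow> 'a list \<Rightarrow> int \<Rightarrow> bool" where
  "good s x q \<longleftrightarrow> (\<forall>t<length s. 0 \<le> q + int t \<and> q + int t < int (length x) \<longrightarrow> x ! nat (q + int t) = s ! t)"

lemma occurs_at_iff: "occurs_at s w i \<longleftrightarrow> i + length s \<le> length w \<and> (\<forall>t<length s. w!(i+t) = s!t)"
  unfolding occurs_at_def
proof (intro iffI conjI allI impI; (elim conjE)?)
  fix t assume "i + length s \<le> length w" "take (length s) (drop i w) = s" "t < length s"
  then have "s ! t = take (length s) (drop i w) ! t" by simp
  also have "\<dots> = drop i w ! t" using \<open>t < length s\<close> by simp
  also have "\<dots> = w ! (i + t)" using \<open>t < length s\<close> \<open>i + length s \<le> length w\<close> by simp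
  finally show "w ! (i + t) = s ! t" by simp
next
  assume "i + length s \<le> length w" "\<forall>t<length s. w ! (i + t) = s ! t"
  then show "take (length s) (drop i w) = s" by (intro nth_equalityI) auto
qed auto

lemma seed_char:
  assumes "x \<noteq> []"
  shows "is_seed s x \<longleftrightarrow> sublist s x \<and>
     (\<forall>p<length x. \<exists>q. q \<le> int p \<and> int p < q + int (length s) \<and> good s x q)"
proof
  assume H: "is_seed s x"
  then obtain w where cw: "covers s w" and xw: "sublist x w" and sx: "sublist s x" unfolding is_seed_def by auto
  from xw obtain ps ss where w: "w = ps @ x @ ss" unfolding sublist_def by auto
  have "\<exists>q. q \<le> int p \<and> int p < q + int (length s) \<and> good s x q" if p: "p < length x" for p
  proof -
    have "length ps + p < length w" using w p by simp
    then obtain i0 where oc: "occurs_at s w i0" and i0: "i0 \<le> length ps + p" "length ps + p < i0 + length s"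
      using cw unfolding covers_def by blast
    have oc2: "\<And>t. t < length s \<Longrightarrow> w!(i0+t) = s!t" using oc by (simp add: occurs_at_iff)
    define q where "q = int i0 - int (length ps)"
    have "good s x q" unfolding good_def
    proof (intro allI impI)
      fix t assume t: "t < length s" and b: "0 \<le> q + int t \<and> q + int t < int (length x)"
      then obtain k where k: "q + int t = int k" using zero_le_imp_eq_int by blast
      then have e: "i0 + t = length ps + k" unfolding q_def by linarith
      have ek: "nat (q + int t) = k" using k by simp
      have "w ! (i0 + t) = x ! nat (q + int t)" unfolding e w ek using b k
        by (simp add: nth_append)
      then show "x ! nat (q + int t) = s ! t" using oc2[OF t] by simp
    qed
    then show ?thesis using i0 by (intro exI[of _ q]) (auto simp: q_def)
  qed
  then show "sublist s x \<and> (\<forall>p<length x. \<exists>q. q \<le> int p \<and> int p < q + int (length s) \<and> good s x q)"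
    using sx by blast
next
  assume H: "sublist s x \<and> (\<forall>p<length x. \<exists>q. q \<le> int p \<and> int p < q + int (length s) \<and> good s x q)"
  then have sx: "sublist s x" and pc: "\<And>p. p < length x \<Longrightarrow> \<exists>q. q \<le> int p \<and> int p < q + int (length s) \<and> good s x q"
    by auto
  define l where "l = length s"
  define X where "X = length x"
  have lX: "l \<le> X" using sx unfolding l_def X_def by (rule sublist_length_le)
  have X0: "0 < X" using assms unfolding X_def by simp
  define SA where "SA = {q. good s x q \<and> - int l < q \<and> q \<le> 0}"
  define SB where "SB = {q. good s x q \<and> int X - int l \<le> q \<and> q < int X}"
  have fSA: "finite SA" unfolding SA_def by (rule finite_subset[of _ "{- int l<..0}"]) auto
  have fSB: "finite SB" unfolding SB_def by (rule finite_subset[of _ "{int X - int l..<int X}"]) auto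
  obtain q0 where q0: "q0 \<le> 0" "0 < q0 + int l" "good s x q0" using pc[of 0] X0 unfolding X_def l_def by auto
  have "q0 \<in> SA" using q0 unfolding SA_def by auto
  then have neA: "SA \<noteq> {}" by blast
  obtain q1 where q1: "q1 \<le> int (X - 1)" "int (X - 1) < q1 + int l" "good s x q1" using pc[of "X - 1"] X0 unfolding X_def l_def by auto
  have "q1 \<in> SB" using q1 X0 unfolding SB_def by auto
  then have neB: "SB \<noteq> {}" by blast
  define qa where "qa = Max SA"
  define qb where "qb = Min SB"
  have qaS: "qa \<in> SA" unfolding qa_def using fSA neA by simp
  have qbS: "qb \<in> SB" unfolding qb_def using fSB neB by simp
  have qaM: "\<And>q. q \<in> SA \<Longrightarrow> q \<le> qa" unfolding qa_def using fSA by simp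
  have qbM: "\<And>q. q \<in> SB \<Longrightarrow> qb \<le> q" unfolding qb_def using fSB by simp
  define a where "a = nat (- qa)"
  define b where "b = nat (qb + int l - int X)"
  have al: "a < l" and ga: "good s x qa" and qa_a: "qa = - int a" using qaS unfolding SA_def a_def by auto
  have bl: "b \<le> l" and gb: "good s x qb" and qb_b: "qb = int X + int b - int l" and qbX: "qb < int X"
    using qbS unfolding SB_def b_def by auto
  define w where "w = take a s @ x @ drop (l - b) s"
  have lw: "length w = a + X + b" unfolding w_def X_def l_def using al bl l_def by simp
  have wn: "w ! P = (if P < a then s ! P else if P < a + X then x ! (P - a) else s ! (P - a - X + (l - b)))"
    if "P < length w" for P
  proof -
    have la: "length (take a s) = a" using al unfolding l_def by simp
    show ?thesis
    proof (cases "P < a")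
      case True then show ?thesis unfolding w_def using la by (simp add: nth_append)
    next
      case F1: False
      show ?thesis
      proof (cases "P < a + X")
        case True
        then have "P - a < length x" using F1 unfolding X_def by linarith
        then show ?thesis unfolding w_def using la F1 True by (simp add: nth_append X_def)
      next
        case False
        then have "\<not> P - a < length x" using F1 unfolding X_def by linarith
        then have "w ! P = drop (l - b) s ! (P - a - X)" unfolding w_def using la F1 by (simp add: nth_append X_def)
        also have "\<dots> = s ! (l - b + (P - a - X))" using bl unfolding l_def by simp
        finally show ?thesis using F1 False by (simp add: add.commute)
      qed
    qed
  qed
  have gd: "\<And>q t. good s x q \<Longrightarrow> t < l \<Longrightarrow> 0 \<le> q + int t \<Longrightarrow> q + int t < int X \<Longrightarrow> x ! nat (q + int t) = s ! t"
    unfolding good_def l_def X_def by blast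
  have occ0: "occurs_at s w 0" unfolding occurs_at_iff
  proof (intro conjI allI impI)
    show "0 + length s \<le> length w" using lw lX unfolding l_def by simp
    fix t assume t: "t < length s"
    show "w ! (0 + t) = s ! t"
    proof (cases "t < a")
      case True then show ?thesis using wn[of t] lw by simp
    next
      case False
      have "t < a + X" using t lX unfolding l_def by simp
      then have "w ! t = x ! (t - a)" using wn[of t] lw False by simp
      also have "\<dots> = x ! nat (qa + int t)" using False qa_a by (simp add: nat_diff_distrib)
      also have "\<dots> = s ! t" using gd[OF ga, of t] t False qa_a lX unfolding l_def by simp
      finally show ?thesis by simp
    qed
  qed
  have occI: "occurs_at s w (a + nat q)" if "good s x q" "0 \<le> q" "q + int l \<le> int X" for q
    unfolding occurs_at_iff
  proof (intro conjI allI impI)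
    show "a + nat q + length s \<le> length w" using lw that unfolding l_def by simp
    fix t assume t: "t < length s"
    have lt: "nat q + t < X" using that t unfolding l_def by linarith
    have "w ! (a + nat q + t) = x ! (nat q + t)" using wn[of "a + nat q + t"] lw lt by simp
    also have "\<dots> = s ! t" using gd[OF that(1), of t] that t unfolding l_def by (simp add: nat_add_distrib)
    finally show "w ! (a + nat q + t) = s ! t" .
  qed
  obtain mb where mb: "qb = int mb" using qbS lX unfolding SB_def by (metis diff_ge_0_iff_ge mem_Collect_eq of_nat_le_iff order_trans zero_le_imp_eq_int)
  have mbX: "mb < X" "X \<le> mb + l" and bmb: "b = mb + l - X" using qbS lX unfolding SB_def b_def mb by auto
  have occB: "occurs_at s w (a + nat qb)" unfolding occurs_at_iff mb nat_int
  proof (intro conjI allI impI)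
    show "a + mb + length s \<le> length w" using lw mbX bmb unfolding l_def by simp
    fix t assume t: "t < length s"
    show "w ! (a + mb + t) = s ! t"
    proof (cases "mb + t < X")
      case True
      have "w ! (a + mb + t) = x ! (mb + t)" using wn[of "a + mb + t"] lw True by simp
      also have "\<dots> = s ! t" using gd[OF gb, of t] True mb t unfolding l_def by (simp add: of_nat_add[symmetric] del: of_nat_add)
      finally show ?thesis .
    next
      case False
      have "w ! (a + mb + t) = s ! (a + mb + t - a - X + (l - b))"
        using wn[of "a + mb + t"] lw False bmb t mbX unfolding l_def by simp
      also have "a + mb + t - a - X + (l - b) = t" using False bmb bl mbX by simp
      finally show ?thesis by simp
    qed
  qed
  have "covers s w" unfolding covers_def
  proof (intro allI impI)
    fix P assume P: "P < length w"
    show "\<exists>i. occurs_at s w i \<and> i \<le> P \<and> P < i + length s"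
    proof (cases "P < a")
      case True then show ?thesis using occ0 al unfolding l_def by auto
    next
      case False
      show ?thesis
      proof (cases "P < a + X")
        case False
        then show ?thesis using occB qb_b qbX lw P bl
          by (intro exI[of _ "a + nat qb"]) (auto simp: l_def)
      next
        case True
        define p where "p = P - a"
        have pX: "p < length x" using True False unfolding p_def X_def by simp
        obtain q where q: "q \<le> int p" "int p < q + int l" "good s x q" using pc[OF pX] unfolding l_def by auto
        have Pp: "P = a + p" using False unfolding p_def by simp
        show ?thesis
        proof (cases "q < 0")
          case True
          then have "q \<in> SA" using q unfolding SA_def by auto
          then have "q \<le> qa" by (rule qaM)
          then show ?thesis using occ0 q qa_a Pp unfolding l_def by (intro exI[of _ 0]) auto
        next
          case qn: False
          show ?thesis
          proof (cases "q + int l \<le> int X")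
            case True
            then show ?thesis using occI[OF q(3) _ True] qn q Pp unfolding l_def
              by (intro exI[of _ "a + nat q"]) auto
          next
            case False
            then have "q \<in> SB" using q pX unfolding SB_def X_def by auto
            then have "qb \<le> q" by (rule qbM)
            then show ?thesis using occB q qb_b Pp pX unfolding l_def X_def
              by (intro exI[of _ "a + nat qb"]) auto
          qed
        qed
      qed
    qed
  qed
  moreover have "sublist x w" unfolding w_def by (metis sublist_appendI)
  ultimately show "is_seed s x" using sx unfolding is_seed_def by blast
qed


definition agreeC :: "'a list \<Rightarrow> nat \<Rightarrow> nat \<Rightarrow> int \<Rightarrow> bool" where
  "agreeC u j l q \<longleftrightarrow> (\<forall>t<l. 0 \<le> q + int t \<longrightarrow> u ! nat (q + int t) = u ! (j+t))"

definition Cov :: "'a list \<Rightarrow> nat \<Rightarrow> nat \<Rightarrow> bool" where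
  "Cov u j l \<longleftrightarrow> (\<forall>p<j. \<exists>q. q < int j \<and> q \<le> int p \<and> int p < q + int l \<and> agreeC u j l q)"

definition Zc :: "'a list \<Rightarrow> nat \<Rightarrow> nat \<Rightarrow> bool" where
  "Zc u j l \<longleftrightarrow> j = 0 \<or> (\<exists>d. j < d \<and> d \<le> l \<and> j + l \<le> d + lcpf u 0 d)"

lemma lcp_nth: "l \<le> lcpf u k j \<Longrightarrow> t < l \<Longrightarrow> u ! (k+t) = u ! (j+t)"
  using lcp_ge[of l u k j] by auto

lemma agree_shift: "l \<le> lcpf u k j \<Longrightarrow> agreeC u k l q \<longleftrightarrow> agreeC u j l q"
  unfolding agreeC_def using lcp_nth[of l u k j] by auto

lemma Cov_rec:
  assumes n: "j + l \<le> length u" and l0: "0 < l"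
  shows "Cov u j l \<longleftrightarrow> Zc u j l \<or> (\<exists>k. k < j \<and> j \<le> k + l \<and> l \<le> lcpf u k j \<and>
            (\<forall>k'. k < k' \<and> k' < j \<longrightarrow> \<not> l \<le> lcpf u k' j) \<and> Cov u k l)"
proof
  assume C: "Cov u j l"
  show "Zc u j l \<or> (\<exists>k. k < j \<and> j \<le> k + l \<and> l \<le> lcpf u k j \<and>
            (\<forall>k'. k < k' \<and> k' < j \<longrightarrow> \<not> l \<le> lcpf u k' j) \<and> Cov u k l)"
  proof (cases "j = 0")
    case True then show ?thesis unfolding Zc_def by simp
  next
    case False
    then have jp: "j - 1 < j" by simp
    from C[unfolded Cov_def, rule_format, OF jp]
    obtain q where q: "q < int j" "q \<le> int (j - 1)" "int (j - 1) < q + int l" "agreeC u j l q"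
      by blast
    show ?thesis
    proof (cases "q < 0")
      case True
      define d where "d = nat (int j - q)"
      define m where "m = nat (q + int l)"
      have dj: "j < d" "d \<le> l" using True q False unfolding d_def by auto
      have md: "d + m = j + l" using q False True unfolding d_def m_def by auto
      have "m \<le> lcpf u 0 d" unfolding lcp_ge
      proof (intro allI impI conjI)
        fix t' assume t': "t' < m"
        show "0 + t' < length u" "d + t' < length u" using t' md n dj by auto
        define t where "t = t' + d - j"
        have tl: "t < l" using t' md dj unfolding t_def by auto
        have qt: "q + int t = int t'" using dj unfolding t_def d_def by auto
        have "u ! nat (q + int t) = u ! (j + t)" using q(4) tl qt unfolding agreeC_def by auto
        moreover have "j + t = d + t'" using dj unfolding t_def by auto
        ultimately show "u ! (0 + t') = u ! (d + t')" using qt by simp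
      qed
      then have "Zc u j l" unfolding Zc_def using dj md by (intro disjI2 exI[of _ d]) auto
      then show ?thesis by simp
    next
      case False
      define k0 where "k0 = nat q"
      have k0: "k0 < j" "j \<le> k0 + l" using False q unfolding k0_def by auto
      have lk0: "l \<le> lcpf u k0 j" unfolding lcp_ge
      proof (intro allI impI conjI)
        fix t assume t: "t < l"
        show "k0 + t < length u" "j + t < length u" using t k0 n by auto
        show "u ! (k0 + t) = u ! (j + t)"
        proof -
          have "q = int k0" using False unfolding k0_def by simp
          then have "nat (q + int t) = k0 + t" by simp
          have "0 \<le> q + int t" using False by simp
          from q(4)[unfolded agreeC_def, rule_format, OF t this]
          show ?thesis using \<open>nat (q + int t) = k0 + t\<close> by simp
        qed
      qed
      define K where "K = (GREATEST k. k < j \<and> l \<le> lcpf u k j)"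
      have ex: "k0 < j \<and> l \<le> lcpf u k0 j" using k0 lk0 by simp
      have bnd: "\<And>y. y < j \<and> l \<le> lcpf u y j \<Longrightarrow> y \<le> j" by auto
      have K: "K < j \<and> l \<le> lcpf u K j" unfolding K_def
        by (rule GreatestI_nat[of "\<lambda>k. k < j \<and> l \<le> lcpf u k j" k0 j, OF ex bnd])
      have Kmax: "\<And>y. y < j \<and> l \<le> lcpf u y j \<Longrightarrow> y \<le> K" unfolding K_def
        using Greatest_le_nat[of "\<lambda>k. k < j \<and> l \<le> lcpf u k j" _ j, OF _ bnd] by simp
      have "k0 \<le> K" using Kmax ex by blast
      have CK: "Cov u K l" unfolding Cov_def
      proof (intro allI impI)
        fix p assume p: "p < K"
        have "p < j" using p K by simp
        from C[unfolded Cov_def, rule_format, OF this]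
        obtain q' where q': "q' < int j" "q' \<le> int p" "int p < q' + int l" "agreeC u j l q'"
          by blast
        then show "\<exists>q. q < int K \<and> q \<le> int p \<and> int p < q + int l \<and> agreeC u K l q"
          using p agree_shift[of l u K j q'] K by (intro exI[of _ q']) auto
      qed
      have "\<forall>k'. K < k' \<and> k' < j \<longrightarrow> \<not> l \<le> lcpf u k' j"
      proof (intro allI impI notI)
        fix k' assume "K < k' \<and> k' < j" "l \<le> lcpf u k' j"
        then have "k' \<le> K" using Kmax by simp
        then show False using \<open>K < k' \<and> k' < j\<close> by simp
      qed
      then show ?thesis using K CK \<open>k0 \<le> K\<close> k0 by (intro disjI2 exI[of _ K]) auto
    qed
  qed
next
  assume H: "Zc u j l \<or> (\<exists>k. k < j \<and> j \<le> k + l \<and> l \<le> lcpf u k j \<and>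
            (\<forall>k'. k < k' \<and> k' < j \<longrightarrow> \<not> l \<le> lcpf u k' j) \<and> Cov u k l)"
  show "Cov u j l"
  proof (cases "Zc u j l")
    case True
    show ?thesis
    proof (cases "j = 0")
      case True then show ?thesis unfolding Cov_def by simp
    next
      case False
      then obtain d where d: "j < d" "d \<le> l" "j + l \<le> d + lcpf u 0 d" using \<open>Zc u j l\<close> unfolding Zc_def by auto
      define q where "q = int j - int d"
      have ag: "agreeC u j l q" unfolding agreeC_def
      proof (intro allI impI)
        fix t assume t: "t < l" "0 \<le> q + int t"
        define t' where "t' = nat (q + int t)"
        have tt: "d + t' = j + t" "t' < j + l - d" using t d unfolding t'_def q_def by auto
        have "j + l - d \<le> lcpf u 0 d" using d by simp
        then have "u ! (0 + t') = u ! (d + t')" using lcp_nth tt(2) by blast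
        then show "u ! nat (q + int t) = u ! (j + t)" using tt unfolding t'_def by simp
      qed
      show ?thesis unfolding Cov_def
        using ag d by (intro allI impI exI[of _ q]) (auto simp: q_def)
    qed
  next
    case False
    then obtain k where k: "k < j" "j \<le> k + l" "l \<le> lcpf u k j" "Cov u k l" using H by blast
    show ?thesis unfolding Cov_def
    proof (intro allI impI)
      fix p assume p: "p < j"
      show "\<exists>q. q < int j \<and> q \<le> int p \<and> int p < q + int l \<and> agreeC u j l q"
      proof (cases "p < k")
        case True
        then obtain q where q: "q < int k" "q \<le> int p" "int p < q + int l" "agreeC u k l q"
          using k(4) unfolding Cov_def by blast
        then show ?thesis using agree_shift[OF k(3)] k by (intro exI[of _ q]) auto
      next
        case False
        have "agreeC u j l (int k)" unfolding agreeC_def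
        proof (intro allI impI)
          fix t assume t: "t < l"
          have "nat (int k + int t) = k + t" by simp
          then show "u ! nat (int k + int t) = u ! (j + t)" using lcp_nth[OF k(3) t] by simp
        qed
        then show ?thesis using False p k by (intro exI[of _ "int k"]) auto
      qed
    qed
  qed
qed


fun Pk :: "'a list \<Rightarrow> nat \<Rightarrow> nat \<Rightarrow> nat \<Rightarrow> nat" where
  "Pk u j v 0 = 0"
| "Pk u j v (Suc k) = (if v \<le> lcpf u k j then Suc k else Pk u j v k)"

fun Tk :: "'a list \<Rightarrow> nat \<Rightarrow> nat \<Rightarrow> nat \<Rightarrow> nat" where
  "Tk u j v 0 = 0"
| "Tk u j v (Suc k) = (if lcpf u k j = v then Suc k else Tk u j v k)"

lemma Pk_le: "Pk u j v kk \<le> kk"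
  by (induction kk) auto

lemma Tk_le: "Tk u j v kk \<le> kk"
  by (induction kk) auto

lemma Pk_Tk: "Pk u j v kk = max (Pk u j (Suc v) kk) (Tk u j v kk)"
proof (induction kk)
  case (Suc kk)
  have "Pk u j (Suc v) kk \<le> kk" "Tk u j v kk \<le> kk" by (rule Pk_le, rule Tk_le)
  then show ?case using Suc by auto
qed simp

lemma Pk_big: "length u < v \<Longrightarrow> Pk u j v kk = 0"
proof (induction kk)
  case (Suc kk)
  have "lcpf u kk j \<le> length u" using lcp_le_len[of u kk j] by simp
  then show ?case using Suc by auto
qed simp

lemma Pk_pos: "0 < Pk u j v kk \<Longrightarrow> Pk u j v kk - 1 < kk \<and> v \<le> lcpf u (Pk u j v kk - 1) j \<and>
   (\<forall>k'. Pk u j v kk - 1 < k' \<and> k' < kk \<longrightarrow> \<not> v \<le> lcpf u k' j)"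
proof (induction kk)
  case (Suc kk)
  show ?case
  proof (cases "v \<le> lcpf u kk j")
    case True then show ?thesis by simp
  next
    case False
    then have "Pk u j v (Suc kk) = Pk u j v kk" by simp
    then show ?thesis using Suc False by (auto simp: less_Suc_eq)
  qed
qed simp

lemma Pk_zero: "Pk u j v kk = 0 \<Longrightarrow> k < kk \<Longrightarrow> \<not> v \<le> lcpf u k j"
proof (induction kk)
  case (Suc kk)
  then show ?case by (auto simp: less_Suc_eq split: if_splits)
qed simp

lemma Cov_rec2:
  assumes n: "j + l \<le> length u" and l0: "0 < l"
  shows "Cov u j l \<longleftrightarrow> Zc u j l \<or> (0 < Pk u j l j \<and> j \<le> Pk u j l j - 1 + l \<and> Cov u (Pk u j l j - 1) l)"
proof -
  have "(\<exists>k. k < j \<and> j \<le> k + l \<and> l \<le> lcpf u k j \<and>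
            (\<forall>k'. k < k' \<and> k' < j \<longrightarrow> \<not> l \<le> lcpf u k' j) \<and> Cov u k l) \<longleftrightarrow>
        (0 < Pk u j l j \<and> j \<le> Pk u j l j - 1 + l \<and> Cov u (Pk u j l j - 1) l)" (is "?A \<longleftrightarrow> ?B")
  proof
    assume ?A
    then obtain k where k: "k < j" "j \<le> k + l" "l \<le> lcpf u k j"
       "\<forall>k'. k < k' \<and> k' < j \<longrightarrow> \<not> l \<le> lcpf u k' j" "Cov u k l" by blast
    have P0: "0 < Pk u j l j" using Pk_zero[of u j l j k] k by (metis neq0_conv)
    note pp = Pk_pos[OF P0]
    have "Pk u j l j - 1 = k"
    proof (rule ccontr)
      assume ne: "Pk u j l j - 1 \<noteq> k"
      show False
      proof (cases "Pk u j l j - 1 < k")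
        case True then show False using pp k by blast
      next
        case False
        then have "k < Pk u j l j - 1" using ne by simp
        then show False using pp k by blast
      qed
    qed
    then show ?B using P0 k by simp
  next
    assume ?B
    then show ?A using Pk_pos[of u j l j] by (intro exI[of _ "Pk u j l j - 1"]) auto
  qed
  then show ?thesis using Cov_rec[OF n l0] by simp
qed

fun RMm :: "'a list \<Rightarrow> nat \<Rightarrow> nat \<Rightarrow> nat" where
  "RMm u j 0 = 0"
| "RMm u j (Suc l) = max (RMm u j l) (if j < Suc l then Suc l + lcpf u 0 (Suc l) else 0)"

lemma RMm_ge: "0 < i \<Longrightarrow> (i \<le> RMm u j l \<longleftrightarrow> (\<exists>d. j < d \<and> d \<le> l \<and> i \<le> d + lcpf u 0 d))"
proof (induction l)
  case (Suc l)
  then show ?case by (auto simp: le_Suc_eq le_max_iff_disj)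
qed simp

lemma Zc_num: "0 < l \<Longrightarrow> Zc u j l \<longleftrightarrow> j = 0 \<or> j + l \<le> RMm u j l"
  unfolding Zc_def using RMm_ge[of "j + l" u j l] by auto

fun Am :: "'a list \<Rightarrow> nat \<Rightarrow> nat \<Rightarrow> nat" where
  "Am u j 0 = 0"
| "Am u j (Suc l) = max (Am u j l) (j + Suc l + lcpf u (j + Suc l) j)"

lemma Am_ge: "0 < i \<Longrightarrow> (i \<le> Am u j l \<longleftrightarrow> (\<exists>r. j < r \<and> r \<le> j + l \<and> i \<le> r + lcpf u r j))"
proof (induction l)
  case (Suc l)
  have e: "(\<exists>r. j < r \<and> r \<le> j + Suc l \<and> i \<le> r + lcpf u r j) \<longleftrightarrow>
     (\<exists>r. j < r \<and> r \<le> j + l \<and> i \<le> r + lcpf u r j) \<or> i \<le> (j + Suc l) + lcpf u (j + Suc l) j"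
  proof
    assume "\<exists>r. j < r \<and> r \<le> j + Suc l \<and> i \<le> r + lcpf u r j"
    then obtain r where r: "j < r" "r \<le> j + Suc l" "i \<le> r + lcpf u r j" by blast
    show "(\<exists>r. j < r \<and> r \<le> j + l \<and> i \<le> r + lcpf u r j) \<or> i \<le> (j + Suc l) + lcpf u (j + Suc l) j"
    proof (cases "r \<le> j + l")
      case True then show ?thesis using r by blast
    next
      case False then have "r = j + Suc l" using r by simp
      then show ?thesis using r by simp
    qed
  next
    assume "(\<exists>r. j < r \<and> r \<le> j + l \<and> i \<le> r + lcpf u r j) \<or> i \<le> (j + Suc l) + lcpf u (j + Suc l) j"
    then show "\<exists>r. j < r \<and> r \<le> j + Suc l \<and> i \<le> r + lcpf u r j"
    proof
      assume "\<exists>r. j < r \<and> r \<le> j + l \<and> i \<le> r + lcpf u r j"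
      then obtain r where "j < r" "r \<le> j + l" "i \<le> r + lcpf u r j" by blast
      then show ?thesis by (intro exI[of _ r]) simp
    next
      assume "i \<le> (j + Suc l) + lcpf u (j + Suc l) j"
      then show ?thesis by (intro exI[of _ "j + Suc l"]) simp
    qed
  qed
  show ?case unfolding e using Suc by (simp add: le_max_iff_disj)
qed simp

definition okm :: "'a list \<Rightarrow> nat \<Rightarrow> nat \<Rightarrow> bool" where
  "okm u i l \<longleftrightarrow> (\<exists>j. j + l \<le> i \<and> Cov u j l \<and> (i \<le> j + l \<or> (\<exists>r. j < r \<and> r \<le> j + l \<and> i \<le> r + lcpf u r j)))"

lemma okm_num: "0 < i \<Longrightarrow> okm u i l \<longleftrightarrow> (\<exists>j. j + l \<le> i \<and> Cov u j l \<and> i \<le> max (j + l) (Am u j l))"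
  unfolding okm_def using Am_ge by (metis le_max_iff_disj)


lemma periodic:
  assumes "\<And>t. j + d + t < i \<Longrightarrow> u ! (j + d + t) = u ! (j + t)"
  shows "j + m * d + t < i \<Longrightarrow> u ! (j + m * d + t) = u ! (j + t)"
proof (induction m arbitrary: t)
  case (Suc m)
  have "u ! (j + Suc m * d + t) = u ! (j + m * d + (d + t))" by (simp add: algebra_simps)
  also have "\<dots> = u ! (j + (d + t))" using Suc.IH[of "d + t"] Suc.prems by (simp add: algebra_simps)
  also have "\<dots> = u ! (j + t)" using assms[of t] Suc.prems by (simp add: algebra_simps)
  finally show ?case .
qed simp

lemma main_char:
  assumes iu: "i \<le> length u" and i0: "0 < i"
  shows "(\<exists>s. length s = l \<and> is_seed s (take i u)) \<longleftrightarrow> 0 < l \<and> okm u i l"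
proof -
  define x where "x = take i u"
  have lx: "length x = i" using iu unfolding x_def by simp
  have xn: "\<And>p. p < i \<Longrightarrow> x ! p = u ! p" unfolding x_def by simp
  have xne: "x \<noteq> []" using lx i0 by auto
  show ?thesis unfolding x_def[symmetric]
  proof
    assume "\<exists>s. length s = l \<and> is_seed s x"
    then obtain s where sl: "length s = l" and sd: "is_seed s x" by blast
    have sx: "sublist s x" and pc: "\<And>p. p < i \<Longrightarrow> \<exists>q. q \<le> int p \<and> int p < q + int l \<and> good s x q"
      using sd seed_char[OF xne, of s] lx sl by auto
    obtain q00 where "q00 \<le> 0" "0 < q00 + int l" using pc[OF i0] by auto
    then have l0: "0 < l" by simp
    from sx obtain ps ss where xs: "x = ps @ s @ ss" unfolding sublist_def by blast
    define J where "J = (\<lambda>j. j + l \<le> i \<and> (\<forall>t<l. u ! (j + t) = s ! t))"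
    have J0: "J (length ps)" unfolding J_def
    proof (intro conjI allI impI)
      show "length ps + l \<le> i" using lx xs sl by simp
      fix t assume t: "t < l"
      have "x ! (length ps + t) = s ! t" unfolding xs using t sl by (simp add: nth_append)
      moreover have "length ps + t < i" using lx xs sl t by simp
      ultimately show "u ! (length ps + t) = s ! t" using xn by simp
    qed
    have Jb: "\<And>y. J y \<Longrightarrow> y \<le> i" unfolding J_def by simp
    define j where "j = (GREATEST y. J y)"
    have Jj: "J j" unfolding j_def by (rule GreatestI_nat[of J, OF J0 Jb])
    have Jmax: "\<And>y. J y \<Longrightarrow> y \<le> j" unfolding j_def using Greatest_le_nat[of J _ i, OF _ Jb] by simp
    have ji: "j + l \<le> i" and sj: "\<And>t. t < l \<Longrightarrow> u ! (j + t) = s ! t" using Jj unfolding J_def by auto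
    have cov: "Cov u j l" unfolding Cov_def
    proof (intro allI impI)
      fix p assume p: "p < j"
      then obtain q where q: "q \<le> int p" "int p < q + int l" "good s x q" using pc[of p] ji by auto
      have "agreeC u j l q" unfolding agreeC_def
      proof (intro allI impI)
        fix t assume t: "t < l" "0 \<le> q + int t"
        have lt: "q + int t < int i" using q t p ji by linarith
        then have "x ! nat (q + int t) = s ! t" using q(3) t sl lx unfolding good_def by auto
        moreover have "nat (q + int t) < i" using lt t by linarith
        ultimately show "u ! nat (q + int t) = u ! (j + t)" using xn sj t by simp
      qed
      then show "\<exists>q. q < int j \<and> q \<le> int p \<and> int p < q + int l \<and> agreeC u j l q"
        using q p by (intro exI[of _ q]) auto
    qed
    have right: "i \<le> j + l \<or> (\<exists>r. j < r \<and> r \<le> j + l \<and> i \<le> r + lcpf u r j)"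
    proof (cases "i \<le> j + l")
      case False
      then have pi: "j + l < i" by simp
      then obtain q where q: "q \<le> int (j + l)" "int (j + l) < q + int l" "good s x q" using pc by blast
      define r where "r = nat q"
      have rq: "q = int r" and jr: "j < r" "r \<le> j + l" using q unfolding r_def by auto
      have gr: "\<And>t. t < l \<Longrightarrow> r + t < i \<Longrightarrow> u ! (r + t) = s ! t"
      proof -
        fix t assume t: "t < l" "r + t < i"
        have "x ! nat (q + int t) = s ! t" using q(3) t sl lx rq unfolding good_def by auto
        moreover have "nat (q + int t) = r + t" using rq by simp
        ultimately show "u ! (r + t) = s ! t" using xn t by simp
      qed
      have ir: "i < r + l"
      proof (rule ccontr)
        assume "\<not> i < r + l"
        then have "J r" unfolding J_def using gr by auto
        then show False using Jmax jr by fastforce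
      qed
      have "i - r \<le> lcpf u r j" unfolding lcp_ge
      proof (intro allI impI conjI)
        fix t assume t: "t < i - r"
        show "r + t < length u" "j + t < length u" using t iu ir jr ji by auto
        show "u ! (r + t) = u ! (j + t)" using gr[of t] sj[of t] t ir by simp
      qed
      then show ?thesis using jr by (intro disjI2 exI[of _ r]) auto
    qed simp
    show "0 < l \<and> okm u i l" unfolding okm_def using l0 ji cov right by blast
  next
    assume "0 < l \<and> okm u i l"
    then obtain j where l0: "0 < l" and ji: "j + l \<le> i" and cov: "Cov u j l"
       and right: "i \<le> j + l \<or> (\<exists>r. j < r \<and> r \<le> j + l \<and> i \<le> r + lcpf u r j)"
      unfolding okm_def by blast
    define s where "s = take l (drop j u)"
    have sl: "length s = l" using ji iu unfolding s_def by simp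
    have sn: "\<And>t. t < l \<Longrightarrow> s ! t = u ! (j + t)" using ji iu unfolding s_def by simp
    have "s = take l (drop j x)" unfolding s_def x_def using ji by (simp add: drop_take min_def)
    then have sx: "sublist s x"
      using sublist_order.order.trans[OF prefix_imp_sublist[OF take_is_prefix] suffix_imp_sublist[OF suffix_drop]] by simp
    have pc: "\<exists>q. q \<le> int p \<and> int p < q + int l \<and> good s x q" if p: "p < i" for p
    proof (cases "p < j")
      case True
      then obtain q where q: "q < int j" "q \<le> int p" "int p < q + int l" "agreeC u j l q"
        using cov unfolding Cov_def by blast
      have "good s x q" unfolding good_def
      proof (intro allI impI)
        fix t assume t: "t < length s" "0 \<le> q + int t \<and> q + int t < int (length x)"
        then have "nat (q + int t) < i" using lx by linarith
        then have "x ! nat (q + int t) = u ! nat (q + int t)" using xn by simp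
        also have "\<dots> = u ! (j + t)" using q(4) t sl unfolding agreeC_def by simp
        finally show "x ! nat (q + int t) = s ! t" using sn t sl by simp
      qed
      then show ?thesis using q by blast
    next
      case False
      show ?thesis
      proof (cases "i \<le> j + l")
        case True
        have "good s x (int j)" unfolding good_def
        proof (intro allI impI)
          fix t assume t: "t < length s" "0 \<le> int j + int t \<and> int j + int t < int (length x)"
          then have "x ! nat (int j + int t) = u ! (j + t)" using xn lx by (simp add: nat_int_add)
          then show "x ! nat (int j + int t) = s ! t" using sn t sl by simp
        qed
        then show ?thesis using True False p by (intro exI[of _ "int j"]) auto
      next
        case F2: False
        then obtain r where r: "j < r" "r \<le> j + l" "i \<le> r + lcpf u r j" using right by auto
        define d where "d = r - j"
        have d: "0 < d" "d \<le> l" "r = j + d" using r unfolding d_def by auto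
        have per1: "\<And>t. j + d + t < i \<Longrightarrow> u ! (j + d + t) = u ! (j + t)"
        proof -
          fix t assume t: "j + d + t < i"
          have "t < lcpf u r j" using t r d by simp
          then have "Suc t \<le> lcpf u r j" by simp
          then show "u ! (j + d + t) = u ! (j + t)" using lcp_nth[of "Suc t" u r j t] d by simp
        qed
        define m where "m = (p - j) div d"
        define q where "q = j + m * d"
        have dm: "(p - j) div d * d + (p - j) mod d = p - j" by (rule div_mult_mod_eq)
        have md: "(p - j) mod d < d" using d(1) by simp
        have qp: "q \<le> p" unfolding q_def m_def using False dm by linarith
        have pq: "p < q + d" unfolding q_def m_def using False dm md by linarith
        have "good s x (int q)" unfolding good_def
        proof (intro allI impI)
          fix t assume t: "t < length s" "0 \<le> int q + int t \<and> int q + int t < int (length x)"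
          then have qt: "q + t < i" using lx by simp
          have "x ! nat (int q + int t) = u ! (q + t)" using xn qt by (simp add: nat_int_add)
          also have "\<dots> = u ! (j + t)" using periodic[OF per1, where m=m and t=t] qt unfolding q_def by simp
          finally show "x ! nat (int q + int t) = s ! t" using sn t sl by simp
        qed
        then show ?thesis using qp pq d by (intro exI[of _ "int q"]) auto
      qed
    qed
    have "is_seed s x" using seed_char[OF xne, of s] sx pc lx sl by auto
    then show "\<exists>s. length s = l \<and> is_seed s x" using sl by blast
  qed
qed

lemma okm_self: "0 < i \<Longrightarrow> okm u i i"
  unfolding okm_def Cov_def by (intro exI[of _ 0]) simp

lemma seed_array_char:
  assumes "1 \<le> i" "i \<le> length u"
  shows "seed_array u i = (LEAST l. 0 < l \<and> okm u i l)"
proof -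
  have "\<And>l. (\<exists>s. length s = l \<and> is_seed s (take i u)) \<longleftrightarrow> 0 < l \<and> okm u i l"
    using main_char[OF assms(2)] assms(1) by simp
  then show ?thesis unfolding seed_array_def shortest_seed_len_def by simp
qed


definition HT :: "(state \<Rightarrow> bool) \<Rightarrow> com \<Rightarrow> (state \<Rightarrow> bool) \<Rightarrow> nat \<Rightarrow> bool" where
  "HT P c Q T \<longleftrightarrow> (\<forall>s. P s \<longrightarrow> (\<exists>t s'. big_step c s t s' \<and> t \<le> T \<and> Q s'))"

lemma HT_seq: "HT P c1 Q T1 \<Longrightarrow> HT Q c2 R T2 \<Longrightarrow> HT P (Seq c1 c2) R (T1 + T2)"
  unfolding HT_def by (meson add_mono big_step.Seq)

lemma HT_conseq: "HT P c Q T \<Longrightarrow> (\<And>s. P' s \<Longrightarrow> P s) \<Longrightarrow> (\<And>s. Q s \<Longrightarrow> Q' s) \<Longrightarrow> T \<le> T' \<Longrightarrow> HT P' c Q' T'"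
  unfolding HT_def by (meson order.trans)

lemma HT_while:
  assumes b1: "\<And>m s. m < K \<Longrightarrow> I m s \<Longrightarrow> bval b s"
    and b2: "\<And>s. I K s \<Longrightarrow> \<not> bval b s"
    and body: "\<And>m. m < K \<Longrightarrow> HT (I m) c (I (Suc m)) T"
  shows "HT (I 0) (While b c) (I K) (K * (T + 1) + 1)"
proof -
  have main: "K - m = k \<Longrightarrow> m \<le> K \<Longrightarrow> I m s \<Longrightarrow>
     (\<exists>t s'. big_step (While b c) s t s' \<and> t \<le> (K - m) * (T + 1) + 1 \<and> I K s')" for k m s
  proof (induction k arbitrary: m s)
    case 0
    then have "m = K" by simp
    then have "\<not> bval b s" using b2 0 by simp
    then show ?case using 0 \<open>m = K\<close> big_step.WhileFalse by fastforce
  next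
    case (Suc k)
    have mN': "m < K" using Suc by simp
    have bs: "bval b s" using b1[OF mN' Suc.prems(3)] .
    obtain t1 s1 where s1: "big_step c s t1 s1" "t1 \<le> T" "I (Suc m) s1"
      using body[OF mN'] Suc.prems(3) unfolding HT_def by blast
    have "K - Suc m = k" using Suc by simp
    from Suc.IH[OF this _ s1(3)] mN'
    obtain t2 s2 where s2: "big_step (While b c) s1 t2 s2" "t2 \<le> (K - Suc m) * (T + 1) + 1" "I K s2" by auto
    have "big_step (While b c) s (t1 + t2 + 1) s2" using big_step.WhileTrue[OF bs s1(1) s2(1)] .
    moreover have "t1 + t2 + 1 \<le> (K - m) * (T + 1) + 1"
    proof -
      have "K - m = Suc (K - Suc m)" using mN' by simp
      then show ?thesis using s1(2) s2(2) by simp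
    qed
    ultimately show ?case using s2(3) by blast
  qed
  show ?thesis unfolding HT_def using main[where k=K and m=0] by simp
qed

fun lf :: "com \<Rightarrow> bool" where
  "lf SKIP = True"
| "lf (Assign x e) = True"
| "lf (ArrAssign a i e) = True"
| "lf (Seq c1 c2) = (lf c1 \<and> lf c2)"
| "lf (If b c1 c2) = (lf c1 \<and> lf c2)"
| "lf (While b c) = False"

fun ex :: "com \<Rightarrow> state \<Rightarrow> state" where
  "ex SKIP s = s"
| "ex (Assign x e) s = s\<lparr>vars := (vars s)(x := aval e s)\<rparr>"
| "ex (ArrAssign a i e) s = s\<lparr>arrs := (arrs s)(a := (arrs s a)(aval i s := aval e s))\<rparr>"
| "ex (Seq c1 c2) s = ex c2 (ex c1 s)"
| "ex (If b c1 c2) s = (if bval b s then ex c1 s else ex c2 s)"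
| "ex (While b c) s = s"

fun tmc :: "com \<Rightarrow> state \<Rightarrow> nat" where
  "tmc SKIP s = 1"
| "tmc (Assign x e) s = 1"
| "tmc (ArrAssign a i e) s = 1"
| "tmc (Seq c1 c2) s = tmc c1 s + tmc c2 (ex c1 s)"
| "tmc (If b c1 c2) s = (if bval b s then tmc c1 s else tmc c2 s) + 1"
| "tmc (While b c) s = 0"

fun tmax :: "com \<Rightarrow> nat" where
  "tmax SKIP = 1"
| "tmax (Assign x e) = 1"
| "tmax (ArrAssign a i e) = 1"
| "tmax (Seq c1 c2) = tmax c1 + tmax c2"
| "tmax (If b c1 c2) = max (tmax c1) (tmax c2) + 1"
| "tmax (While b c) = 0"

lemma lf_big: "lf c \<Longrightarrow> big_step c s (tmc c s) (ex c s)"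
proof (induction c arbitrary: s)
  case SKIP show ?case using big_step.Skip[of s] by simp
next
  case (Assign x e) show ?case using big_step.Assign[of x e s] by simp
next
  case (ArrAssign a i e) show ?case using big_step.ArrAssign[of a i e s] by simp
next
  case (Seq c1 c2) then show ?case by (auto intro: big_step.Seq)
next
  case (If b c1 c2)
  show ?case
  proof (cases "bval b s")
    case True then show ?thesis using big_step.IfTrue[of b s c1 "tmc c1 s" "ex c1 s" c2] If by simp
  next
    case False then show ?thesis using big_step.IfFalse[of b s c2 "tmc c2 s" "ex c2 s" c1] If by simp
  qed
qed simp

lemma tmc_le: "tmc c s \<le> tmax c"
proof (induction c arbitrary: s)
  case (Seq c1 c2) then show ?case by (simp add: add_mono)
next
  case (If b c1 c2) then show ?case by (auto simp: le_max_iff_disj)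
qed auto

lemma HT_lf: "lf c \<Longrightarrow> (\<And>s. P s \<Longrightarrow> Q (ex c s)) \<Longrightarrow> tmax c \<le> T \<Longrightarrow> HT P c Q T"
  unfolding HT_def using lf_big tmc_le order.trans by blast


definition Wd :: "'a list \<Rightarrow> int" where "Wd u = int (length u) + 2"
definition ix :: "'a list \<Rightarrow> nat \<Rightarrow> nat \<Rightarrow> int" where "ix u a b = int a * Wd u + int b"
definition ufun :: "int list \<Rightarrow> int \<Rightarrow> int" where
  "ufun u = (\<lambda>i. if 1 \<le> i \<and> i \<le> int (length u) then u ! nat (i - 1) else 0)"

lemma ix_inj:
  assumes "b \<le> length u + 1" "b' \<le> length u + 1"
  shows "ix u a b = ix u a' b' \<longleftrightarrow> a = a' \<and> b = b'"
proof
  assume e: "ix u a b = ix u a' b'"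
  have W: "int b < Wd u" "int b' < Wd u" using assms unfolding Wd_def by auto
  have lt: False if "x < y" "ix u x c = ix u y c'" "int c < Wd u" for x y c c'
  proof -
    have "(int x + 1) * Wd u \<le> int y * Wd u" using that(1) unfolding Wd_def by (intro mult_right_mono) auto
    then show False using that unfolding ix_def by (simp add: algebra_simps)
  qed
  have "a = a'" using lt[of a a' b b'] lt[of a' a b' b] e W by (metis linorder_neqE_nat)
  then show "a = a' \<and> b = b'" using e unfolding ix_def by simp
qed simp

lemma ix_eq_simp: "b \<le> length u + 1 \<Longrightarrow> b' \<le> length u + 1 \<Longrightarrow> (ix u a b = ix u a' b') = (a = a' \<and> b = b')"
  by (rule ix_inj)

definition base :: "int list \<Rightarrow> state \<Rightarrow> bool" where
  "base u s \<longleftrightarrow> vars s ''n'' = int (length u) \<and> vars s ''W'' = Wd u \<and> arrs s ''u'' = ufun u"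

definition zer :: "string \<Rightarrow> state \<Rightarrow> bool" where "zer X s \<longleftrightarrow> arrs s X = (\<lambda>_. 0)"

definition Zs1 :: "state \<Rightarrow> bool" where
  "Zs1 s \<longleftrightarrow> zer ''R'' s \<and> zer ''A'' s \<and> zer ''T'' s \<and> zer ''P'' s \<and> zer ''Seed'' s"

definition P0loop :: com where
  "P0loop = While (Less (V ''k'') (V ''n'')) (Seq (Assign ''NW'' (Plus (V ''NW'') (V ''W''))) (Assign ''k'' (Plus (V ''k'') (N 1))))"

definition P0 :: com where
  "P0 = Seq (Seq (Assign ''W'' (Plus (V ''n'') (N 2))) (Seq (Assign ''k'' (N 0)) (Assign ''NW'' (N 0)))) P0loop"

definition I0 :: "int list \<Rightarrow> nat \<Rightarrow> state \<Rightarrow> bool" where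
  "I0 u m s \<longleftrightarrow> base u s \<and> Zs1 s \<and> vars s ''k'' = int m \<and> vars s ''NW'' = int m * Wd u"

definition Post0 :: "int list \<Rightarrow> state \<Rightarrow> bool" where
  "Post0 u s \<longleftrightarrow> base u s \<and> Zs1 s \<and> vars s ''NW'' = int (length u) * Wd u"

lemma P0_HT: "HT (\<lambda>s. s = init_state u) P0 (Post0 u) (3 + (length u * 3 + 1))"
proof -
  have h1: "HT (\<lambda>s. s = init_state u) (Seq (Assign ''W'' (Plus (V ''n'') (N 2))) (Seq (Assign ''k'' (N 0)) (Assign ''NW'' (N 0)))) (I0 u 0) 3"
    by (rule HT_lf) (auto simp: init_state_def I0_def base_def Zs1_def zer_def Wd_def ufun_def)
  have h2: "HT (I0 u 0) P0loop (I0 u (length u)) (length u * (2 + 1) + 1)"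
    unfolding P0loop_def
  proof (rule HT_while)
    fix m s assume "m < length u" "I0 u m s" then show "bval (Less (V ''k'') (V ''n'')) s" by (simp add: I0_def base_def)
  next
    fix s assume "I0 u (length u) s" then show "\<not> bval (Less (V ''k'') (V ''n'')) s" by (simp add: I0_def base_def)
  next
    fix m assume "m < length u"
    show "HT (I0 u m) (Seq (Assign ''NW'' (Plus (V ''NW'') (V ''W''))) (Assign ''k'' (Plus (V ''k'') (N 1)))) (I0 u (Suc m)) 2"
      by (rule HT_lf) (auto simp: I0_def base_def Zs1_def zer_def algebra_simps)
  qed
  have "HT (\<lambda>s. s = init_state u) P0 (I0 u (length u)) (3 + (length u * (2 + 1) + 1))"
    unfolding P0_def by (rule HT_seq[OF h1 h2])
  then show ?thesis by (rule HT_conseq) (auto simp: I0_def Post0_def)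
qed


text \<open>Phase 1: the LCP table L[a][b] = lcpf a b, a,b <= n\<close>

definition P1body :: com where
  "P1body = Seq (If (And (Less (V ''a'') (V ''n'')) (And (Less (V ''b'') (V ''n''))
        (Eq (Arr ''u'' (Plus (V ''a'') (N 1))) (Arr ''u'' (Plus (V ''b'') (N 1))))))
      (ArrAssign ''L'' (Plus (V ''aW'') (V ''b'')) (Plus (Arr ''L'' (Plus (Plus (Plus (V ''aW'') (V ''b'')) (V ''W'')) (N 1))) (N 1)))
      (ArrAssign ''L'' (Plus (V ''aW'') (V ''b'')) (N 0)))
    (Assign ''b'' (Minus (V ''b'') (N 1)))"

definition P1in :: com where "P1in = While (Less (N (-1)) (V ''b'')) P1body"

definition P1obody :: com where
  "P1obody = Seq (Assign ''b'' (V ''n'')) (Seq P1in (Seq (Assign ''a'' (Minus (V ''a'') (N 1))) (Assign ''aW'' (Minus (V ''aW'') (V ''W'')))))"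

definition P1 :: com where
  "P1 = Seq (Seq (Assign ''a'' (V ''n'')) (Assign ''aW'' (V ''NW''))) (While (Less (N (-1)) (V ''a'')) P1obody)"

definition Ldone :: "int list \<Rightarrow> (int \<Rightarrow> int) \<Rightarrow> nat \<Rightarrow> nat \<Rightarrow> bool" where
  "Ldone u f m k \<longleftrightarrow> (\<forall>a' b'. a' \<le> length u \<longrightarrow> b' \<le> length u \<longrightarrow>
      (length u < a' + m \<or> (a' + m = length u \<and> length u < b' + k)) \<longrightarrow> f (ix u a' b') = int (lcpf u a' b'))"

definition I1in :: "int list \<Rightarrow> nat \<Rightarrow> nat \<Rightarrow> state \<Rightarrow> bool" where
  "I1in u m k s \<longleftrightarrow> base u s \<and> Zs1 s \<and> vars s ''a'' = int (length u - m) \<and>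
     vars s ''aW'' = int (length u - m) * Wd u \<and> vars s ''b'' = int (length u) - int k \<and> Ldone u (arrs s ''L'') m k"

definition I1 :: "int list \<Rightarrow> nat \<Rightarrow> state \<Rightarrow> bool" where
  "I1 u m s \<longleftrightarrow> base u s \<and> Zs1 s \<and> vars s ''a'' = int (length u) - int m \<and>
     vars s ''aW'' = (int (length u) - int m) * Wd u \<and> Ldone u (arrs s ''L'') m 0"

definition Ltab :: "int list \<Rightarrow> (int \<Rightarrow> int) \<Rightarrow> bool" where
  "Ltab u f \<longleftrightarrow> (\<forall>a b. a \<le> length u \<longrightarrow> b \<le> length u \<longrightarrow> f (ix u a b) = int (lcpf u a b))"

lemma Ldone_step:
  assumes L: "Ldone u f m k" and m: "m \<le> length u" and k: "k \<le> length u"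
  shows "Ldone u (f(ix u (length u - m) (length u - k) := int (lcpf u (length u - m) (length u - k)))) m (Suc k)"
  unfolding Ldone_def
proof (intro allI impI)
  fix a' b' assume a': "a' \<le> length u" and b': "b' \<le> length u"
    and c: "length u < a' + m \<or> a' + m = length u \<and> length u < b' + Suc k"
  show "(f(ix u (length u - m) (length u - k) := int (lcpf u (length u - m) (length u - k)))) (ix u a' b') = int (lcpf u a' b')"
  proof (cases "a' = length u - m \<and> b' = length u - k")
    case True then show ?thesis by simp
  next
    case False
    then have ne: "ix u a' b' \<noteq> ix u (length u - m) (length u - k)" using ix_inj[of b' u "length u - k" a' "length u - m"] b' by auto
    have "length u < a' + m \<or> a' + m = length u \<and> length u < b' + k" using c False m k by auto
    then show ?thesis using ne L a' b' unfolding Ldone_def by auto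
  qed
qed

lemma Ldone_val:
  assumes L: "Ldone u f m k" and m: "m \<le> length u" and k: "k \<le> length u"
  shows "(if length u - m < length u \<and> length u - k < length u \<and> u ! (length u - m) = u ! (length u - k)
          then f (ix u (length u - m + 1) (length u - k + 1)) + 1 else 0) = int (lcpf u (length u - m) (length u - k))"
proof (cases "length u - m < length u \<and> length u - k < length u \<and> u ! (length u - m) = u ! (length u - k)")
  case True
  have "f (ix u (length u - m + 1) (length u - k + 1)) = int (lcpf u (length u - m + 1) (length u - k + 1))"
    using L True unfolding Ldone_def by auto
  then show ?thesis using True by (simp add: lcp_simps[of u "length u - m" "length u - k"])
next
  case False
  then show ?thesis by (auto simp: lcp_simps[of u "length u - m" "length u - k"])
qed

lemma P1body_HT:
  assumes m: "m \<le> length u" and k: "k < length u + 1"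
  shows "HT (I1in u m k) P1body (I1in u m (Suc k)) 4"
proof (rule HT_lf)
  show "lf P1body" by (simp add: P1body_def)
  show "tmax P1body \<le> 4" by (simp add: P1body_def)
next
  fix s assume I: "I1in u m k s"
  define n where "n = length u"
  define a0 where "a0 = n - m"
  define b0 where "b0 = n - k"
  have kn: "k \<le> n" using k unfolding n_def by simp
  have va: "vars s ''a'' = int a0" and vb: "vars s ''b'' = int b0" and vaW: "vars s ''aW'' = int a0 * Wd u"
    and vW: "vars s ''W'' = Wd u" and vn: "vars s ''n'' = int n" and vu: "arrs s ''u'' = ufun u"
    and Ld: "Ldone u (arrs s ''L'') m k"
    using I kn unfolding I1in_def base_def a0_def b0_def n_def by auto
  have kn': "k \<le> length u" using kn unfolding n_def by simp
  have val: "(if a0 < n \<and> b0 < n \<and> u ! a0 = u ! b0 then arrs s ''L'' (ix u (a0 + 1) (b0 + 1)) + 1 else 0) = int (lcpf u a0 b0)"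
    using Ldone_val[OF Ld m kn'] unfolding a0_def b0_def n_def by simp
  have i2: "int a0 * Wd u + int b0 + Wd u + 1 = ix u (a0 + 1) (b0 + 1)" unfolding ix_def by (simp add: algebra_simps)
  have e: "ex P1body s = s\<lparr>arrs := (arrs s)(''L'' := (arrs s ''L'')(int a0 * Wd u + int b0 := int (lcpf u a0 b0)))\<rparr>\<lparr>vars := (vars s)(''b'' := int b0 - 1)\<rparr>"
  proof (cases "a0 < n \<and> b0 < n \<and> u ! a0 = u ! b0")
    case True
    then have r: "arrs s ''L'' (int a0 * Wd u + int b0 + Wd u + 1) + 1 = int (lcpf u a0 b0)" using val i2 by simp
    show ?thesis unfolding P1body_def using True r by (simp add: va vb vn vu vaW vW ufun_def n_def)
  next
    case False
    have r: "int (lcpf u a0 b0) = 0" using val unfolding if_not_P[OF False] by simp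
    show ?thesis
    proof (cases "a0 < n \<and> b0 < n")
      case True
      then have "u ! a0 \<noteq> u ! b0" using False by simp
      then show ?thesis unfolding P1body_def using True r by (simp add: va vb vn vu vaW vW ufun_def n_def)
    next
      case F2: False
      then show ?thesis unfolding P1body_def using r by (auto simp: va vb vn vu vaW vW ufun_def n_def)
    qed
  qed
  have ixe: "int a0 * Wd u + int b0 = ix u a0 b0" by (simp add: ix_def)
  have Ld2: "Ldone u ((arrs s ''L'')(ix u a0 b0 := int (lcpf u a0 b0))) m (Suc k)"
    using Ldone_step[OF Ld m kn'] unfolding a0_def b0_def n_def by simp
  show "I1in u m (Suc k) (ex P1body s)" unfolding e ixe
    using I Ld2 kn unfolding I1in_def base_def Zs1_def zer_def b0_def n_def by auto
qed

lemma P1in_HT: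
  assumes m: "m \<le> length u"
  shows "HT (I1in u m 0) P1in (I1in u m (length u + 1)) ((length u + 1) * (4 + 1) + 1)"
  unfolding P1in_def
proof (rule HT_while)
  fix k s assume "k < length u + 1" "I1in u m k s" then show "bval (Less (N (-1)) (V ''b'')) s"
    by (simp add: I1in_def)
next
  fix s assume "I1in u m (length u + 1) s" then show "\<not> bval (Less (N (-1)) (V ''b'')) s"
    by (simp add: I1in_def)
next
  fix k assume "k < length u + 1" then show "HT (I1in u m k) P1body (I1in u m (Suc k)) 4"
    using P1body_HT m by blast
qed

lemma P1obody_HT:
  assumes m: "m < length u + 1"
  shows "HT (I1 u m) P1obody (I1 u (Suc m)) (1 + (((length u + 1) * (4 + 1) + 1) + 2))"
  unfolding P1obody_def
proof (rule HT_seq)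
  show "HT (I1 u m) (Assign ''b'' (V ''n'')) (I1in u m 0) 1"
    by (rule HT_lf) (use m in \<open>auto simp: I1_def I1in_def base_def Zs1_def zer_def\<close>)
  show "HT (I1in u m 0) (Seq P1in (Seq (Assign ''a'' (Minus (V ''a'') (N 1))) (Assign ''aW'' (Minus (V ''aW'') (V ''W''))))) (I1 u (Suc m))
     (((length u + 1) * (4 + 1) + 1) + 2)"
  proof (rule HT_seq[OF P1in_HT])
    show "m \<le> length u" using m by simp
    show "HT (I1in u m (length u + 1)) (Seq (Assign ''a'' (Minus (V ''a'') (N 1))) (Assign ''aW'' (Minus (V ''aW'') (V ''W'')))) (I1 u (Suc m)) 2"
    proof (rule HT_lf)
      fix s assume I: "I1in u m (length u + 1) s"
      have Ld: "Ldone u (arrs s ''L'') m (length u + 1)" using I unfolding I1in_def by simp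
      have "Ldone u (arrs s ''L'') (Suc m) 0" unfolding Ldone_def
      proof (intro allI impI)
        fix a' b' assume a': "a' \<le> length u" and b': "b' \<le> length u"
          and c: "length u < a' + Suc m \<or> a' + Suc m = length u \<and> length u < b' + 0"
        then have "length u < a' + m \<or> a' + m = length u \<and> length u < b' + (length u + 1)" by auto
        from Ld[unfolded Ldone_def, rule_format, OF a' b' this]
        show "arrs s ''L'' (ix u a' b') = int (lcpf u a' b')" .
      qed
      then show "I1 u (Suc m) (ex (Seq (Assign ''a'' (Minus (V ''a'') (N 1))) (Assign ''aW'' (Minus (V ''aW'') (V ''W'')))) s)"
        using I m unfolding I1in_def I1_def base_def Zs1_def zer_def by (auto simp: algebra_simps)
    qed simp_all
  qed
qed

definition Post1 :: "int list \<Rightarrow> state \<Rightarrow> bool" where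
  "Post1 u s \<longleftrightarrow> base u s \<and> Zs1 s \<and> Ltab u (arrs s ''L'')"

lemma P1_HT: "HT (Post0 u) P1 (Post1 u) (2 + ((length u + 1) * ((1 + (((length u + 1) * (4 + 1) + 1) + 2)) + 1) + 1))"
  unfolding P1_def
proof (rule HT_seq)
  show "HT (Post0 u) (Seq (Assign ''a'' (V ''n'')) (Assign ''aW'' (V ''NW''))) (I1 u 0) 2"
    by (rule HT_lf) (auto simp: Post0_def I1_def base_def Zs1_def zer_def Ldone_def)
  have "HT (I1 u 0) (While (Less (N (-1)) (V ''a'')) P1obody) (I1 u (length u + 1))
     ((length u + 1) * ((1 + (((length u + 1) * (4 + 1) + 1) + 2)) + 1) + 1)"
  proof (rule HT_while)
    fix m s assume "m < length u + 1" "I1 u m s" then show "bval (Less (N (-1)) (V ''a'')) s"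
      by (simp add: I1_def)
  next
    fix s assume "I1 u (length u + 1) s" then show "\<not> bval (Less (N (-1)) (V ''a'')) s"
      by (simp add: I1_def)
  next
    fix m assume "m < length u + 1" then show "HT (I1 u m) P1obody (I1 u (Suc m)) (1 + (((length u + 1) * (4 + 1) + 1) + 2))"
      by (rule P1obody_HT)
  qed
  then show "HT (I1 u 0) (While (Less (N (-1)) (V ''a'')) P1obody) (Post1 u)
     ((length u + 1) * ((1 + (((length u + 1) * (4 + 1) + 1) + 2)) + 1) + 1)"
    by (rule HT_conseq) (auto simp: I1_def Post1_def Ltab_def Ldone_def)
qed


text \<open>Phase 2: R[j][l] = RMm j l and A[j][l] = Am j l for j + l <= n\<close>

definition P2body :: com where
  "P2body = Seq (Seq (If (Less (V ''j'') (V ''l'')) (Assign ''tmp'' (Plus (V ''l'') (Arr ''L'' (V ''l'')))) (Assign ''tmp'' (N 0)))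
                     (If (Less (Arr ''R'' (Minus (Plus (V ''jW'') (V ''l'')) (N 1))) (V ''tmp''))
                         (ArrAssign ''R'' (Plus (V ''jW'') (V ''l'')) (V ''tmp''))
                         (ArrAssign ''R'' (Plus (V ''jW'') (V ''l'')) (Arr ''R'' (Minus (Plus (V ''jW'') (V ''l'')) (N 1))))))
           (Seq (Seq (Assign ''tmp'' (Plus (Plus (V ''j'') (V ''l'')) (Arr ''L'' (Plus (V ''rW'') (V ''j'')))))
                     (If (Less (Arr ''A'' (Minus (Plus (V ''jW'') (V ''l'')) (N 1))) (V ''tmp''))
                         (ArrAssign ''A'' (Plus (V ''jW'') (V ''l'')) (V ''tmp''))
                         (ArrAssign ''A'' (Plus (V ''jW'') (V ''l'')) (Arr ''A'' (Minus (Plus (V ''jW'') (V ''l'')) (N 1))))))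
                (Seq (Assign ''l'' (Plus (V ''l'') (N 1))) (Assign ''rW'' (Plus (V ''rW'') (V ''W'')))))"

definition P2in :: com where
  "P2in = While (Less (V ''l'') (Plus (Minus (V ''n'') (V ''j'')) (N 1))) P2body"

definition P2obody :: com where
  "P2obody = Seq (Seq (Assign ''l'' (N 1)) (Assign ''rW'' (Plus (V ''jW'') (V ''W''))))
     (Seq P2in (Seq (Assign ''j'' (Plus (V ''j'') (N 1))) (Assign ''jW'' (Plus (V ''jW'') (V ''W'')))))"

definition P2 :: com where
  "P2 = Seq (Seq (Assign ''j'' (N 0)) (Assign ''jW'' (N 0))) (While (Less (V ''j'') (Plus (V ''n'') (N 1))) P2obody)"

definition Tdone :: "int list \<Rightarrow> (nat \<Rightarrow> nat \<Rightarrow> nat) \<Rightarrow> (int \<Rightarrow> int) \<Rightarrow> nat \<Rightarrow> nat \<Rightarrow> bool" where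
  "Tdone u F f j l \<longleftrightarrow> (\<forall>j' l'. j' + l' \<le> length u \<longrightarrow>
      f (ix u j' l') = int (if j' < j \<or> (j' = j \<and> l' < l) then F j' l' else 0))"

definition Zs2 :: "state \<Rightarrow> bool" where
  "Zs2 s \<longleftrightarrow> zer ''T'' s \<and> zer ''P'' s \<and> zer ''Seed'' s"

definition I2in :: "int list \<Rightarrow> nat \<Rightarrow> nat \<Rightarrow> state \<Rightarrow> bool" where
  "I2in u j m s \<longleftrightarrow> base u s \<and> Zs2 s \<and> Ltab u (arrs s ''L'') \<and> vars s ''j'' = int j \<and> vars s ''jW'' = int j * Wd u \<and>
     vars s ''l'' = int (Suc m) \<and> vars s ''rW'' = int (j + Suc m) * Wd u \<and>
     Tdone u (RMm u) (arrs s ''R'') j (Suc m) \<and> Tdone u (Am u) (arrs s ''A'') j (Suc m)"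

definition I2 :: "int list \<Rightarrow> nat \<Rightarrow> state \<Rightarrow> bool" where
  "I2 u j s \<longleftrightarrow> base u s \<and> Zs2 s \<and> Ltab u (arrs s ''L'') \<and> vars s ''j'' = int j \<and> vars s ''jW'' = int j * Wd u \<and>
     Tdone u (RMm u) (arrs s ''R'') j 0 \<and> Tdone u (Am u) (arrs s ''A'') j 0"

lemma Tdone_read: "Tdone u F f j l \<Longrightarrow> j' + l' \<le> length u \<Longrightarrow> (j' < j \<or> (j' = j \<and> l' < l)) \<Longrightarrow> f (ix u j' l') = int (F j' l')"
  unfolding Tdone_def by auto

lemma Tdone_step: "Tdone u F f j l \<Longrightarrow> j + l \<le> length u \<Longrightarrow> Tdone u F (f(ix u j l := int (F j l))) j (Suc l)"
  unfolding Tdone_def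
proof (intro allI impI)
  fix j' l' assume T: "\<forall>j' l'. j' + l' \<le> length u \<longrightarrow> f (ix u j' l') = int (if j' < j \<or> j' = j \<and> l' < l then F j' l' else 0)"
    and jl: "j + l \<le> length u" and jl': "j' + l' \<le> length u"
  show "(f(ix u j l := int (F j l))) (ix u j' l') = int (if j' < j \<or> j' = j \<and> l' < Suc l then F j' l' else 0)"
  proof (cases "j' = j \<and> l' = l")
    case True then show ?thesis by simp
  next
    case False
    then have "ix u j' l' \<noteq> ix u j l" using ix_inj[of l' u l j' j] jl jl' by auto
    then show ?thesis using T jl' False by auto
  qed
qed

lemma Tdone_next: "Tdone u F f j l \<Longrightarrow> length u < j + l \<Longrightarrow> Tdone u F f (Suc j) 0"
  unfolding Tdone_def by (auto simp: less_Suc_eq)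

lemma Tdone_1: "Tdone u F f j 0 \<Longrightarrow> F j 0 = 0 \<Longrightarrow> Tdone u F f j 1"
  unfolding Tdone_def by auto

lemma P2body_HT:
  assumes m: "m < length u - j" and j: "j \<le> length u"
  shows "HT (I2in u j m) P2body (I2in u j (Suc m)) 12"
proof (rule HT_lf)
  show "lf P2body" by (simp add: P2body_def)
  show "tmax P2body \<le> 12" by (simp add: P2body_def)
next
  fix s assume I: "I2in u j m s"
  define l where "l = Suc m"
  have jl: "j + l \<le> length u" using m unfolding l_def by simp
  have vj: "vars s ''j'' = int j" and vjW: "vars s ''jW'' = int j * Wd u" and vl: "vars s ''l'' = int l"
    and vrW: "vars s ''rW'' = int (j + l) * Wd u" and vW: "vars s ''W'' = Wd u"
    and Lt: "Ltab u (arrs s ''L'')" and TR: "Tdone u (RMm u) (arrs s ''R'') j l" and TA: "Tdone u (Am u) (arrs s ''A'') j l"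
    using I unfolding I2in_def base_def l_def by auto
  have "ix u 0 l = int l" by (simp add: ix_def)
  moreover have "arrs s ''L'' (ix u 0 l) = int (lcpf u 0 l)" using Lt jl unfolding Ltab_def by simp
  ultimately have L1: "arrs s ''L'' (int l) = int (lcpf u 0 l)" by simp
  have "arrs s ''L'' (ix u (j + l) j) = int (lcpf u (j + l) j)" using Lt jl unfolding Ltab_def by simp
  then have L2: "arrs s ''L'' (int (j + l) * Wd u + int j) = int (lcpf u (j + l) j)" by (simp add: ix_def)
  have ixl: "int j * Wd u + int l = ix u j l" unfolding ix_def by simp
  have ixl1: "int j * Wd u + int l - 1 = ix u j m" unfolding ix_def l_def by simp
  have R0: "arrs s ''R'' (ix u j m) = int (RMm u j m)" using Tdone_read[OF TR, of j m] jl unfolding l_def by simp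
  have A0: "arrs s ''A'' (ix u j m) = int (Am u j m)" using Tdone_read[OF TA, of j m] jl unfolding l_def by simp
  have RMs: "RMm u j l = max (RMm u j m) (if j < l then l + lcpf u 0 l else 0)" unfolding l_def by simp
  have Ams: "Am u j l = max (Am u j m) (j + l + lcpf u (j + l) j)" unfolding l_def by simp
  have eR: "arrs (ex P2body s) ''R'' = (arrs s ''R'')(ix u j l := int (RMm u j l))"
    unfolding P2body_def RMs using vj vjW vl L1 ixl ixl1 R0
    by (auto simp: max_def)
  have eA: "arrs (ex P2body s) ''A'' = (arrs s ''A'')(ix u j l := int (Am u j l))"
    unfolding P2body_def Ams using vj vjW vl L2 vrW ixl ixl1 A0
    by (auto simp: max_def)
  have eo: "\<And>X. X \<noteq> ''R'' \<Longrightarrow> X \<noteq> ''A'' \<Longrightarrow> arrs (ex P2body s) X = arrs s X"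
    unfolding P2body_def by auto
  have ev: "\<And>x. x \<noteq> ''tmp'' \<Longrightarrow> x \<noteq> ''l'' \<Longrightarrow> x \<noteq> ''rW'' \<Longrightarrow> vars (ex P2body s) x = vars s x"
    unfolding P2body_def by auto
  have evl: "vars (ex P2body s) ''l'' = vars s ''l'' + 1" "vars (ex P2body s) ''rW'' = vars s ''rW'' + vars s ''W''"
    unfolding P2body_def by auto
  have T1: "Tdone u (RMm u) ((arrs s ''R'')(ix u j l := int (RMm u j l))) j (Suc l)" by (rule Tdone_step[OF TR jl])
  have T2: "Tdone u (Am u) ((arrs s ''A'')(ix u j l := int (Am u j l))) j (Suc l)" by (rule Tdone_step[OF TA jl])
  have sm: "Suc m = l" by (simp add: l_def)
  have bs: "base u s" "Zs2 s" using I unfolding I2in_def by auto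
  show "I2in u j (Suc m) (ex P2body s)"
    unfolding I2in_def base_def Zs2_def zer_def sm eR eA
    using bs Lt T1 T2 vj vjW vl vrW vW unfolding base_def Zs2_def zer_def
    by (simp add: eo ev evl algebra_simps del: RMm.simps Am.simps)
qed

lemma P2in_HT:
  assumes j: "j \<le> length u"
  shows "HT (I2in u j 0) P2in (I2in u j (length u - j)) ((length u + 1) * 13 + 1)"
proof -
  have "HT (I2in u j 0) P2in (I2in u j (length u - j)) ((length u - j) * (12 + 1) + 1)"
    unfolding P2in_def
  proof (rule HT_while)
    fix m s assume "m < length u - j" "I2in u j m s" then show "bval (Less (V ''l'') (Plus (Minus (V ''n'') (V ''j'')) (N 1))) s"
      by (auto simp: I2in_def base_def)
  next
    fix s assume "I2in u j (length u - j) s" then show "\<not> bval (Less (V ''l'') (Plus (Minus (V ''n'') (V ''j'')) (N 1))) s"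
      using j by (auto simp: I2in_def base_def)
  next
    fix m assume "m < length u - j" then show "HT (I2in u j m) P2body (I2in u j (Suc m)) 12"
      using P2body_HT j by blast
  qed
  then show ?thesis by (rule HT_conseq) auto
qed

lemma P2obody_HT:
  assumes j: "j < length u + 1"
  shows "HT (I2 u j) P2obody (I2 u (Suc j)) (2 + (((length u + 1) * 13 + 1) + 2))"
  unfolding P2obody_def
proof (rule HT_seq)
  show "HT (I2 u j) (Seq (Assign ''l'' (N 1)) (Assign ''rW'' (Plus (V ''jW'') (V ''W'')))) (I2in u j 0) 2"
  proof (rule HT_lf)
    fix s assume I: "I2 u j s"
    then have "Tdone u (RMm u) (arrs s ''R'') j 1" "Tdone u (Am u) (arrs s ''A'') j 1"
      using Tdone_1[of u "RMm u" _ j] Tdone_1[of u "Am u" _ j] unfolding I2_def by auto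
    then show "I2in u j 0 (ex (Seq (Assign ''l'' (N 1)) (Assign ''rW'' (Plus (V ''jW'') (V ''W'')))) s)"
      using I unfolding I2_def I2in_def base_def Zs2_def zer_def by (simp add: algebra_simps)
  qed simp_all
  show "HT (I2in u j 0) (Seq P2in (Seq (Assign ''j'' (Plus (V ''j'') (N 1))) (Assign ''jW'' (Plus (V ''jW'') (V ''W''))))) (I2 u (Suc j))
     (((length u + 1) * 13 + 1) + 2)"
  proof (rule HT_seq[OF P2in_HT])
    show "j \<le> length u" using j by simp
    show "HT (I2in u j (length u - j)) (Seq (Assign ''j'' (Plus (V ''j'') (N 1))) (Assign ''jW'' (Plus (V ''jW'') (V ''W'')))) (I2 u (Suc j)) 2"
    proof (rule HT_lf)
      fix s assume I: "I2in u j (length u - j) s"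
      have "length u < j + Suc (length u - j)" using j by simp
      then have "Tdone u (RMm u) (arrs s ''R'') (Suc j) 0" "Tdone u (Am u) (arrs s ''A'') (Suc j) 0"
        using Tdone_next[of u "RMm u" "arrs s ''R''" j] Tdone_next[of u "Am u" "arrs s ''A''" j] I unfolding I2in_def by auto
      then show "I2 u (Suc j) (ex (Seq (Assign ''j'' (Plus (V ''j'') (N 1))) (Assign ''jW'' (Plus (V ''jW'') (V ''W'')))) s)"
        using I unfolding I2in_def I2_def base_def Zs2_def zer_def by (simp add: algebra_simps)
    qed simp_all
  qed
qed

definition Ttab :: "int list \<Rightarrow> (nat \<Rightarrow> nat \<Rightarrow> nat) \<Rightarrow> (int \<Rightarrow> int) \<Rightarrow> bool" where
  "Ttab u F f \<longleftrightarrow> (\<forall>j l. j + l \<le> length u \<longrightarrow> f (ix u j l) = int (F j l))"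

definition Post2 :: "int list \<Rightarrow> state \<Rightarrow> bool" where
  "Post2 u s \<longleftrightarrow> base u s \<and> Zs2 s \<and> Ltab u (arrs s ''L'') \<and> Ttab u (RMm u) (arrs s ''R'') \<and> Ttab u (Am u) (arrs s ''A'')"

lemma P2_HT: "HT (Post1 u) P2 (Post2 u) (2 + ((length u + 1) * ((2 + (((length u + 1) * 13 + 1) + 2)) + 1) + 1))"
  unfolding P2_def
proof (rule HT_seq)
  show "HT (Post1 u) (Seq (Assign ''j'' (N 0)) (Assign ''jW'' (N 0))) (I2 u 0) 2"
    by (rule HT_lf) (auto simp: Post1_def I2_def base_def Zs1_def Zs2_def zer_def Tdone_def)
  have "HT (I2 u 0) (While (Less (V ''j'') (Plus (V ''n'') (N 1))) P2obody) (I2 u (length u + 1))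
     ((length u + 1) * ((2 + (((length u + 1) * 13 + 1) + 2)) + 1) + 1)"
  proof (rule HT_while)
    fix m s assume "m < length u + 1" "I2 u m s" then show "bval (Less (V ''j'') (Plus (V ''n'') (N 1))) s"
      by (auto simp: I2_def base_def)
  next
    fix s assume "I2 u (length u + 1) s" then show "\<not> bval (Less (V ''j'') (Plus (V ''n'') (N 1))) s"
      by (auto simp: I2_def base_def)
  next
    fix m assume "m < length u + 1" then show "HT (I2 u m) P2obody (I2 u (Suc m)) (2 + (((length u + 1) * 13 + 1) + 2))"
      by (rule P2obody_HT)
  qed
  then show "HT (I2 u 0) (While (Less (V ''j'') (Plus (V ''n'') (N 1))) P2obody) (Post2 u)
     ((length u + 1) * ((2 + (((length u + 1) * 13 + 1) + 2)) + 1) + 1)"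
    by (rule HT_conseq) (auto simp: I2_def Post2_def Ttab_def Tdone_def)
qed


text \<open>Phase 3: P[j][v] = Pk j v j (via T[j][w] = Tk j w j)\<close>

definition P3kbody :: com where
  "P3kbody = Seq (ArrAssign ''T'' (Plus (V ''jW'') (Arr ''L'' (Plus (V ''kW'') (V ''j'')))) (Plus (V ''k'') (N 1)))
     (Seq (Assign ''k'' (Plus (V ''k'') (N 1))) (Assign ''kW'' (Plus (V ''kW'') (V ''W''))))"

definition P3vbody :: com where
  "P3vbody = Seq (If (Less (Arr ''P'' (Plus (Plus (V ''jW'') (V ''v'')) (N 1))) (Arr ''T'' (Plus (V ''jW'') (V ''v''))))
        (ArrAssign ''P'' (Plus (V ''jW'') (V ''v'')) (Arr ''T'' (Plus (V ''jW'') (V ''v''))))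
        (ArrAssign ''P'' (Plus (V ''jW'') (V ''v'')) (Arr ''P'' (Plus (Plus (V ''jW'') (V ''v'')) (N 1)))))
     (Assign ''v'' (Minus (V ''v'') (N 1)))"

definition P3obody :: com where
  "P3obody = Seq (Seq (Assign ''k'' (N 0)) (Assign ''kW'' (N 0)))
     (Seq (While (Less (V ''k'') (V ''j'')) P3kbody)
     (Seq (Assign ''v'' (V ''n''))
     (Seq (While (Less (N (-1)) (V ''v'')) P3vbody)
     (Seq (Assign ''j'' (Plus (V ''j'') (N 1))) (Assign ''jW'' (Plus (V ''jW'') (V ''W'')))))))"

definition P3 :: com where
  "P3 = Seq (Seq (Assign ''j'' (N 0)) (Assign ''jW'' (N 0))) (While (Less (V ''j'') (Plus (V ''n'') (N 1))) P3obody)"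

definition Tdn :: "int list \<Rightarrow> (int \<Rightarrow> int) \<Rightarrow> nat \<Rightarrow> nat \<Rightarrow> bool" where
  "Tdn u f j k \<longleftrightarrow> (j \<le> length u \<longrightarrow> (\<forall>w \<le> length u + 1. f (ix u j w) = int (Tk u j w k))) \<and>
     (\<forall>j' w. j < j' \<longrightarrow> j' \<le> length u \<longrightarrow> w \<le> length u + 1 \<longrightarrow> f (ix u j' w) = 0)"

definition Pdone :: "int list \<Rightarrow> (int \<Rightarrow> int) \<Rightarrow> nat \<Rightarrow> nat \<Rightarrow> bool" where
  "Pdone u f j m \<longleftrightarrow> (\<forall>j' v. j' \<le> length u \<longrightarrow> v \<le> length u + 1 \<longrightarrow>
     f (ix u j' v) = int (if v \<le> length u \<and> (j' < j \<or> (j' = j \<and> length u < v + m)) then Pk u j' v j' else 0))"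

definition Q3 :: "int list \<Rightarrow> state \<Rightarrow> bool" where
  "Q3 u s \<longleftrightarrow> base u s \<and> zer ''Seed'' s \<and> Ltab u (arrs s ''L'') \<and> Ttab u (RMm u) (arrs s ''R'') \<and> Ttab u (Am u) (arrs s ''A'')"

definition I3 :: "int list \<Rightarrow> nat \<Rightarrow> state \<Rightarrow> bool" where
  "I3 u j s \<longleftrightarrow> Q3 u s \<and> vars s ''j'' = int j \<and> vars s ''jW'' = int j * Wd u \<and>
     Tdn u (arrs s ''T'') j 0 \<and> Pdone u (arrs s ''P'') j 0"

definition I3k :: "int list \<Rightarrow> nat \<Rightarrow> nat \<Rightarrow> state \<Rightarrow> bool" where
  "I3k u j k s \<longleftrightarrow> Q3 u s \<and> vars s ''j'' = int j \<and> vars s ''jW'' = int j * Wd u \<and>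
     vars s ''k'' = int k \<and> vars s ''kW'' = int k * Wd u \<and>
     Tdn u (arrs s ''T'') j k \<and> Pdone u (arrs s ''P'') j 0"

definition I3v :: "int list \<Rightarrow> nat \<Rightarrow> nat \<Rightarrow> state \<Rightarrow> bool" where
  "I3v u j m s \<longleftrightarrow> Q3 u s \<and> vars s ''j'' = int j \<and> vars s ''jW'' = int j * Wd u \<and>
     vars s ''v'' = int (length u) - int m \<and>
     Tdn u (arrs s ''T'') j j \<and> Pdone u (arrs s ''P'') j m"

lemma Tk_big: "length u < w \<Longrightarrow> Tk u j w k = 0"
proof (induction k)
  case (Suc k)
  have "lcpf u k j \<le> length u" using lcp_le_len[of u k j] by simp
  then show ?case using Suc by auto
qed simp

lemma Tdn_step:
  assumes T: "Tdn u f j k" and j: "j \<le> length u"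
  shows "Tdn u (f(ix u j (lcpf u k j) := int (Suc k))) j (Suc k)"
  unfolding Tdn_def
proof (intro conjI allI impI)
  have lk: "lcpf u k j \<le> length u" using lcp_le_len[of u k j] by simp
  fix w assume "j \<le> length u" and w: "w \<le> length u + 1"
  show "(f(ix u j (lcpf u k j) := int (Suc k))) (ix u j w) = int (Tk u j w (Suc k))"
  proof (cases "w = lcpf u k j")
    case True then show ?thesis by simp
  next
    case False
    then have "ix u j w \<noteq> ix u j (lcpf u k j)" using ix_inj[of w u "lcpf u k j" j j] w lk by auto
    then show ?thesis using T w False j unfolding Tdn_def by auto
  qed
next
  have lk: "lcpf u k j \<le> length u" using lcp_le_len[of u k j] by simp
  fix j' w assume "j < j'" "j' \<le> length u" "w \<le> length u + 1"
  then have "ix u j' w \<noteq> ix u j (lcpf u k j)" using ix_inj[of w u "lcpf u k j" j' j] lk by auto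
  then show "(f(ix u j (lcpf u k j) := int (Suc k))) (ix u j' w) = 0"
    using T \<open>j < j'\<close> \<open>j' \<le> length u\<close> \<open>w \<le> length u + 1\<close> unfolding Tdn_def by auto
qed

lemma P3kbody_HT:
  assumes k: "k < j" and j: "j \<le> length u"
  shows "HT (I3k u j k) P3kbody (I3k u j (Suc k)) 3"
proof (rule HT_lf)
  show "lf P3kbody" by (simp add: P3kbody_def)
  show "tmax P3kbody \<le> 3" by (simp add: P3kbody_def)
next
  fix s assume I: "I3k u j k s"
  have vj: "vars s ''j'' = int j" and vjW: "vars s ''jW'' = int j * Wd u" and vk: "vars s ''k'' = int k"
    and vkW: "vars s ''kW'' = int k * Wd u" and vW: "vars s ''W'' = Wd u"
    and Lt: "Ltab u (arrs s ''L'')" and T: "Tdn u (arrs s ''T'') j k"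
    using I unfolding I3k_def Q3_def base_def by auto
  have "arrs s ''L'' (ix u k j) = int (lcpf u k j)" using Lt k j unfolding Ltab_def by simp
  then have L1: "arrs s ''L'' (int k * Wd u + int j) = int (lcpf u k j)" by (simp add: ix_def)
  have ixe: "int j * Wd u + int (lcpf u k j) = ix u j (lcpf u k j)" by (simp add: ix_def)
  have eT: "arrs (ex P3kbody s) ''T'' = (arrs s ''T'')(ix u j (lcpf u k j) := int (Suc k))"
    unfolding P3kbody_def using vj vjW vk vkW L1 ixe by (simp add: add.commute)
  have eo: "\<And>X. X \<noteq> ''T'' \<Longrightarrow> arrs (ex P3kbody s) X = arrs s X"
    unfolding P3kbody_def by auto
  have ev: "\<And>x. x \<noteq> ''k'' \<Longrightarrow> x \<noteq> ''kW'' \<Longrightarrow> vars (ex P3kbody s) x = vars s x"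
    unfolding P3kbody_def by auto
  have evk: "vars (ex P3kbody s) ''k'' = vars s ''k'' + 1" "vars (ex P3kbody s) ''kW'' = vars s ''kW'' + vars s ''W''"
    unfolding P3kbody_def by auto
  have T2: "Tdn u ((arrs s ''T'')(ix u j (lcpf u k j) := int (Suc k))) j (Suc k)" by (rule Tdn_step[OF T j])
  have q: "Q3 u s" "Pdone u (arrs s ''P'') j 0" using I unfolding I3k_def by auto
  have q2: "Q3 u (ex P3kbody s)" using q(1) unfolding Q3_def base_def zer_def by (simp add: eo ev)
  show "I3k u j (Suc k) (ex P3kbody s)"
    unfolding I3k_def eT using q2 q T2 vj vjW vk vkW vW by (simp add: eo ev evk algebra_simps)
qed

lemma Pdone_step:
  assumes P: "Pdone u f j m" and m: "m \<le> length u" and j: "j \<le> length u"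
  shows "Pdone u (f(ix u j (length u - m) := int (Pk u j (length u - m) j))) j (Suc m)"
  unfolding Pdone_def
proof (intro allI impI)
  fix j' v assume j': "j' \<le> length u" and v: "v \<le> length u + 1"
  show "(f(ix u j (length u - m) := int (Pk u j (length u - m) j))) (ix u j' v) =
       int (if v \<le> length u \<and> (j' < j \<or> j' = j \<and> length u < v + Suc m) then Pk u j' v j' else 0)"
  proof (cases "j' = j \<and> v = length u - m")
    case True then show ?thesis using m by simp
  next
    case False
    then have "ix u j' v \<noteq> ix u j (length u - m)" using ix_inj[of v u "length u - m" j' j] v by auto
    moreover have "(v \<le> length u \<and> (j' < j \<or> j' = j \<and> length u < v + Suc m)) \<longleftrightarrow>
                   (v \<le> length u \<and> (j' < j \<or> j' = j \<and> length u < v + m))" using False m by auto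
    ultimately show ?thesis using P j' v unfolding Pdone_def by simp
  qed
qed

lemma P3vbody_HT:
  assumes m: "m < length u + 1" and j: "j \<le> length u"
  shows "HT (I3v u j m) P3vbody (I3v u j (Suc m)) 3"
proof (rule HT_lf)
  show "lf P3vbody" by (simp add: P3vbody_def)
  show "tmax P3vbody \<le> 3" by (simp add: P3vbody_def)
next
  fix s assume I: "I3v u j m s"
  define v0 where "v0 = length u - m"
  have v0n: "v0 \<le> length u" unfolding v0_def by simp
  have vj: "vars s ''j'' = int j" and vjW: "vars s ''jW'' = int j * Wd u" and vv: "vars s ''v'' = int v0"
    and vW: "vars s ''W'' = Wd u"
    and T: "Tdn u (arrs s ''T'') j j" and P: "Pdone u (arrs s ''P'') j m"
    using I m unfolding I3v_def Q3_def base_def v0_def by auto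
  have T1: "arrs s ''T'' (int j * Wd u + int v0) = int (Tk u j v0 j)"
    using T v0n j unfolding Tdn_def ix_def by auto
  have P1: "arrs s ''P'' (int j * Wd u + int v0 + 1) = int (Pk u j (Suc v0) j)"
  proof -
    have "arrs s ''P'' (ix u j (Suc v0)) = int (if Suc v0 \<le> length u \<and> (j < j \<or> j = j \<and> length u < Suc v0 + m) then Pk u j (Suc v0) j else 0)"
      using P j v0n unfolding Pdone_def by simp
    also have "\<dots> = int (Pk u j (Suc v0) j)" using Pk_big[of u "Suc v0" j j] m unfolding v0_def by auto
    moreover have "ix u j (Suc v0) = int j * Wd u + int v0 + 1" by (simp add: ix_def)
    ultimately show ?thesis by simp
  qed
  have ixe: "int j * Wd u + int v0 = ix u j v0" by (simp add: ix_def)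
  have val: "Pk u j v0 j = max (Pk u j (Suc v0) j) (Tk u j v0 j)" by (rule Pk_Tk)
  have eP: "arrs (ex P3vbody s) ''P'' = (arrs s ''P'')(ix u j v0 := int (Pk u j v0 j))"
    unfolding P3vbody_def val using vjW vv T1 P1 ixe by (auto simp: max_def)
  have eo: "\<And>X. X \<noteq> ''P'' \<Longrightarrow> arrs (ex P3vbody s) X = arrs s X"
    unfolding P3vbody_def by auto
  have ev: "\<And>x. x \<noteq> ''v'' \<Longrightarrow> vars (ex P3vbody s) x = vars s x"
    unfolding P3vbody_def by auto
  have evv: "vars (ex P3vbody s) ''v'' = vars s ''v'' - 1"
    unfolding P3vbody_def by auto
  have P2: "Pdone u ((arrs s ''P'')(ix u j v0 := int (Pk u j v0 j))) j (Suc m)"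
    unfolding v0_def by (rule Pdone_step[OF P _ j]) (use m in simp)
  have q: "Q3 u s" using I unfolding I3v_def by auto
  have q2: "Q3 u (ex P3vbody s)" using q unfolding Q3_def base_def zer_def by (simp add: eo ev)
  show "I3v u j (Suc m) (ex P3vbody s)"
    unfolding I3v_def eP using q2 P2 T vj vjW vv m unfolding v0_def by (simp add: eo ev evv)
qed

lemma Tdn_next: "Tdn u f j j \<Longrightarrow> Tdn u f (Suc j) 0"
  unfolding Tdn_def by auto

lemma Pdone_next: "Pdone u f j (length u + 1) \<Longrightarrow> Pdone u f (Suc j) 0"
  unfolding Pdone_def
proof (intro allI impI)
  fix j' v assume P: "\<forall>j' v. j' \<le> length u \<longrightarrow> v \<le> length u + 1 \<longrightarrow>
          f (ix u j' v) = int (if v \<le> length u \<and> (j' < j \<or> j' = j \<and> length u < v + (length u + 1)) then Pk u j' v j' else 0)"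
    and j': "j' \<le> length u" and v: "v \<le> length u + 1"
  have "(v \<le> length u \<and> (j' < j \<or> j' = j \<and> length u < v + (length u + 1))) \<longleftrightarrow>
        (v \<le> length u \<and> (j' < Suc j \<or> j' = Suc j \<and> length u < v + 0))" by auto
  then show "f (ix u j' v) = int (if v \<le> length u \<and> (j' < Suc j \<or> j' = Suc j \<and> length u < v + 0) then Pk u j' v j' else 0)"
    using P j' v by simp
qed

lemma P3obody_HT:
  assumes j: "j < length u + 1"
  shows "HT (I3 u j) P3obody (I3 u (Suc j)) (2 + ((j * (3 + 1) + 1) + (1 + (((length u + 1) * (3 + 1) + 1) + 2))))"
  unfolding P3obody_def
proof (rule HT_seq)
  show "HT (I3 u j) (Seq (Assign ''k'' (N 0)) (Assign ''kW'' (N 0))) (I3k u j 0) 2"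
    by (rule HT_lf) (auto simp: I3_def I3k_def Q3_def base_def zer_def)
  have jn: "j \<le> length u" using j by simp
  have Wk: "HT (I3k u j 0) (While (Less (V ''k'') (V ''j'')) P3kbody) (I3k u j j) (j * (3 + 1) + 1)"
  proof (rule HT_while)
    fix m s assume "m < j" "I3k u j m s" then show "bval (Less (V ''k'') (V ''j'')) s" by (auto simp: I3k_def)
  next
    fix s assume "I3k u j j s" then show "\<not> bval (Less (V ''k'') (V ''j'')) s" by (auto simp: I3k_def)
  next
    fix m assume "m < j" then show "HT (I3k u j m) P3kbody (I3k u j (Suc m)) 3" using P3kbody_HT jn by blast
  qed
  have Wv: "HT (I3v u j 0) (While (Less (N (-1)) (V ''v'')) P3vbody) (I3v u j (length u + 1)) ((length u + 1) * (3 + 1) + 1)"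
  proof (rule HT_while)
    fix m s assume "m < length u + 1" "I3v u j m s" then show "bval (Less (N (-1)) (V ''v'')) s" by (auto simp: I3v_def)
  next
    fix s assume "I3v u j (length u + 1) s" then show "\<not> bval (Less (N (-1)) (V ''v'')) s" by (auto simp: I3v_def)
  next
    fix m assume "m < length u + 1" then show "HT (I3v u j m) P3vbody (I3v u j (Suc m)) 3" using P3vbody_HT jn by blast
  qed
  have A1: "HT (I3k u j j) (Assign ''v'' (V ''n'')) (I3v u j 0) 1"
    by (rule HT_lf) (auto simp: I3k_def I3v_def Q3_def base_def zer_def)
  have A2: "HT (I3v u j (length u + 1)) (Seq (Assign ''j'' (Plus (V ''j'') (N 1))) (Assign ''jW'' (Plus (V ''jW'') (V ''W'')))) (I3 u (Suc j)) 2"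
  proof (rule HT_lf)
    fix s assume I: "I3v u j (length u + 1) s"
    then have "Tdn u (arrs s ''T'') (Suc j) 0" "Pdone u (arrs s ''P'') (Suc j) 0"
      using Tdn_next Pdone_next unfolding I3v_def by auto
    then show "I3 u (Suc j) (ex (Seq (Assign ''j'' (Plus (V ''j'') (N 1))) (Assign ''jW'' (Plus (V ''jW'') (V ''W'')))) s)"
      using I unfolding I3v_def I3_def Q3_def base_def zer_def by (simp add: algebra_simps)
  qed simp_all
  show "HT (I3k u j 0) (Seq (While (Less (V ''k'') (V ''j'')) P3kbody) (Seq (Assign ''v'' (V ''n''))
     (Seq (While (Less (N (-1)) (V ''v'')) P3vbody) (Seq (Assign ''j'' (Plus (V ''j'') (N 1))) (Assign ''jW'' (Plus (V ''jW'') (V ''W''))))))) (I3 u (Suc j))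
     ((j * (3 + 1) + 1) + (1 + (((length u + 1) * (3 + 1) + 1) + 2)))"
    by (rule HT_seq[OF Wk HT_seq[OF A1 HT_seq[OF Wv A2]]])
qed

definition Ptab :: "int list \<Rightarrow> (int \<Rightarrow> int) \<Rightarrow> bool" where
  "Ptab u f \<longleftrightarrow> (\<forall>j v. j \<le> length u \<longrightarrow> v \<le> length u \<longrightarrow> f (ix u j v) = int (Pk u j v j))"

definition Post3 :: "int list \<Rightarrow> state \<Rightarrow> bool" where
  "Post3 u s \<longleftrightarrow> Q3 u s \<and> Ptab u (arrs s ''P'')"

lemma P3_HT: "HT (Post2 u) P3 (Post3 u) (2 + ((length u + 1) * ((2 + ((length u * (3 + 1) + 1) + (1 + (((length u + 1) * (3 + 1) + 1) + 2)))) + 1) + 1))"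
  unfolding P3_def
proof (rule HT_seq)
  show "HT (Post2 u) (Seq (Assign ''j'' (N 0)) (Assign ''jW'' (N 0))) (I3 u 0) 2"
  proof (rule HT_lf)
    fix s assume "Post2 u s"
    then show "I3 u 0 (ex (Seq (Assign ''j'' (N 0)) (Assign ''jW'' (N 0))) s)"
      by (auto simp: Post2_def I3_def Q3_def base_def Zs2_def zer_def Tdn_def Pdone_def)
  qed simp_all
  have "HT (I3 u 0) (While (Less (V ''j'') (Plus (V ''n'') (N 1))) P3obody) (I3 u (length u + 1))
     ((length u + 1) * ((2 + ((length u * (3 + 1) + 1) + (1 + (((length u + 1) * (3 + 1) + 1) + 2)))) + 1) + 1)"
  proof (rule HT_while)
    fix m s assume "m < length u + 1" "I3 u m s" then show "bval (Less (V ''j'') (Plus (V ''n'') (N 1))) s"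
      by (auto simp: I3_def Q3_def base_def)
  next
    fix s assume "I3 u (length u + 1) s" then show "\<not> bval (Less (V ''j'') (Plus (V ''n'') (N 1))) s"
      by (auto simp: I3_def Q3_def base_def)
  next
    fix m assume m: "m < length u + 1"
    show "HT (I3 u m) P3obody (I3 u (Suc m)) (2 + ((length u * (3 + 1) + 1) + (1 + (((length u + 1) * (3 + 1) + 1) + 2))))"
      by (rule HT_conseq[OF P3obody_HT[OF m]]) (use m in auto)
  qed
  then show "HT (I3 u 0) (While (Less (V ''j'') (Plus (V ''n'') (N 1))) P3obody) (Post3 u)
     ((length u + 1) * ((2 + ((length u * (3 + 1) + 1) + (1 + (((length u + 1) * (3 + 1) + 1) + 2)))) + 1) + 1)"
    by (rule HT_conseq) (auto simp: I3_def Post3_def Ptab_def Pdone_def)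
qed


fun Mx :: "'a list \<Rightarrow> nat \<Rightarrow> nat \<Rightarrow> nat" where
  "Mx u l 0 = 0"
| "Mx u l (Suc j) = (if Cov u j l then max (Mx u l j) (max (j + l) (Am u j l)) else Mx u l j)"

lemma Mx_ge: "0 < i \<Longrightarrow> (i \<le> Mx u l m \<longleftrightarrow> (\<exists>j'<m. Cov u j' l \<and> i \<le> max (j' + l) (Am u j' l)))"
proof (induction m)
  case (Suc m)
  show ?case
  proof (cases "Cov u m l")
    case True
    then show ?thesis using Suc by (auto simp: less_Suc_eq le_max_iff_disj)
  next
    case False
    then show ?thesis using Suc by (auto simp: less_Suc_eq)
  qed
qed simp

lemma okm_Mx: "0 < l \<Longrightarrow> okm u (j + l) l \<longleftrightarrow> j + l \<le> Mx u l (Suc j)"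
proof -
  assume l: "0 < l"
  have "okm u (j + l) l \<longleftrightarrow> (\<exists>j'. j' + l \<le> j + l \<and> Cov u j' l \<and> j + l \<le> max (j' + l) (Am u j' l))"
    using okm_num[of "j + l" u l] l by simp
  also have "\<dots> \<longleftrightarrow> (\<exists>j'<Suc j. Cov u j' l \<and> j + l \<le> max (j' + l) (Am u j' l))" by (simp add: less_Suc_eq_le)
  also have "\<dots> \<longleftrightarrow> j + l \<le> Mx u l (Suc j)" using Mx_ge[of "j + l" u l "Suc j"] l by simp
  finally show ?thesis .
qed

definition Sv :: "'a list \<Rightarrow> nat \<Rightarrow> nat \<Rightarrow> nat" where
  "Sv u i L = (if \<exists>l'. 0 < l' \<and> l' \<le> L \<and> okm u i l' then (LEAST l'. 0 < l' \<and> okm u i l') else 0)"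

lemma Sv_0: "Sv u i 0 = 0" unfolding Sv_def by auto

lemma Sv_pos: "Sv u i L \<noteq> 0 \<longleftrightarrow> (\<exists>l'. 0 < l' \<and> l' \<le> L \<and> okm u i l')"
proof
  assume "\<exists>l'. 0 < l' \<and> l' \<le> L \<and> okm u i l'"
  then obtain l' where "0 < l'" "okm u i l'" by blast
  then have "0 < l' \<and> okm u i l'" by simp
  then have "0 < (LEAST l'. 0 < l' \<and> okm u i l')" by (rule LeastI2_ex[OF exI]) simp
  then show "Sv u i L \<noteq> 0" unfolding Sv_def using \<open>\<exists>l'. 0 < l' \<and> l' \<le> L \<and> okm u i l'\<close> by simp
qed (auto simp: Sv_def split: if_splits)

lemma Sv_step:
  assumes l: "0 < l"
  shows "Sv u i l = (if Sv u i (l - 1) \<noteq> 0 then Sv u i (l - 1) else if okm u i l then l else 0)"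
proof (cases "Sv u i (l - 1) \<noteq> 0")
  case True
  then obtain l' where "0 < l'" "l' \<le> l - 1" "okm u i l'" using Sv_pos by blast
  then have "\<exists>l'. 0 < l' \<and> l' \<le> l \<and> okm u i l'" by (intro exI[of _ l']) auto
  then show ?thesis using True unfolding Sv_def by (auto split: if_splits)
next
  case False
  then have no: "\<And>l'. 0 < l' \<Longrightarrow> l' \<le> l - 1 \<Longrightarrow> \<not> okm u i l'" using Sv_pos by blast
  show ?thesis
  proof (cases "okm u i l")
    case True
    have "(LEAST l'. 0 < l' \<and> okm u i l') = l"
    proof (rule Least_equality)
      show "0 < l \<and> okm u i l" using True l by simp
      fix y assume "0 < y \<and> okm u i y"
      show "l \<le> y"
      proof (rule ccontr)
        assume "\<not> l \<le> y"
        then have "y \<le> l - 1" by simp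
        then show False using no \<open>0 < y \<and> okm u i y\<close> by blast
      qed
    qed
    then show ?thesis using True False l unfolding Sv_def by auto
  next
    case F2: False
    have "\<not> (\<exists>l'. 0 < l' \<and> l' \<le> l \<and> okm u i l')"
    proof
      assume "\<exists>l'. 0 < l' \<and> l' \<le> l \<and> okm u i l'"
      then obtain l' where l': "0 < l'" "l' \<le> l" "okm u i l'" by blast
      then show False using no[of l'] F2 by (cases "l' = l") auto
    qed
    then show ?thesis using False F2 unfolding Sv_def by auto
  qed
qed

lemma okm_small: "i < l \<Longrightarrow> \<not> okm u i l" unfolding okm_def by auto

lemma Sv_small: "0 < l \<Longrightarrow> i < l \<Longrightarrow> Sv u i l = Sv u i (l - 1)"
  using Sv_step[of l u i] okm_small[of i l u] by auto

lemma Sv_full: "1 \<le> i \<Longrightarrow> i \<le> L \<Longrightarrow> Sv u i L = (LEAST l'. 0 < l' \<and> okm u i l')"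
  unfolding Sv_def using okm_self[of i u] by auto


definition B1 :: com where
  "B1 = Seq (Assign ''pv'' (Arr ''P'' (Plus (V ''jW'') (V ''l''))))
     (If (Eq (V ''j'') (N 0)) (ArrAssign ''C'' (V ''j'') (N 1))
       (If (Less (Arr ''R'' (Plus (V ''jW'') (V ''l''))) (Plus (V ''j'') (V ''l'')))
          (If (And (Less (N 0) (V ''pv'')) (And (Less (V ''j'') (Plus (V ''pv'') (V ''l''))) (Eq (Arr ''C'' (Minus (V ''pv'') (N 1))) (N 1))))
              (ArrAssign ''C'' (V ''j'') (N 1)) (ArrAssign ''C'' (V ''j'') (N 0)))
          (ArrAssign ''C'' (V ''j'') (N 1))))"

definition B2 :: com where
  "B2 = If (Eq (Arr ''C'' (V ''j'')) (N 1))
     (Seq (Assign ''tmp'' (Plus (V ''j'') (V ''l'')))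
       (Seq (If (Less (V ''tmp'') (Arr ''A'' (Plus (V ''jW'') (V ''l'')))) (Assign ''tmp'' (Arr ''A'' (Plus (V ''jW'') (V ''l'')))) SKIP)
            (If (Less (V ''cur'') (V ''tmp'')) (Assign ''cur'' (V ''tmp'')) SKIP)))
     SKIP"

definition B3 :: com where
  "B3 = Seq (If (And (Not (Less (V ''cur'') (Plus (V ''j'') (V ''l'')))) (Eq (Arr ''Seed'' (Plus (V ''j'') (V ''l''))) (N 0)))
        (ArrAssign ''Seed'' (Plus (V ''j'') (V ''l'')) (V ''l'')) SKIP)
     (Seq (Assign ''j'' (Plus (V ''j'') (N 1))) (Assign ''jW'' (Plus (V ''jW'') (V ''W''))))"

definition P4in :: com where
  "P4in = While (Less (V ''j'') (Plus (Minus (V ''n'') (V ''l'')) (N 1))) (Seq B1 (Seq B2 B3))"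

definition P4obody :: com where
  "P4obody = Seq (Seq (Assign ''j'' (N 0)) (Seq (Assign ''jW'' (N 0)) (Assign ''cur'' (N 0))))
     (Seq P4in (Assign ''l'' (Plus (V ''l'') (N 1))))"

definition P4 :: com where
  "P4 = Seq (Assign ''l'' (N 1)) (While (Less (V ''l'') (Plus (V ''n'') (N 1))) P4obody)"

definition Q4 :: "int list \<Rightarrow> state \<Rightarrow> bool" where
  "Q4 u s \<longleftrightarrow> base u s \<and> Ttab u (RMm u) (arrs s ''R'') \<and> Ttab u (Am u) (arrs s ''A'') \<and> Ptab u (arrs s ''P'')"

definition Cdone :: "int list \<Rightarrow> (int \<Rightarrow> int) \<Rightarrow> nat \<Rightarrow> nat \<Rightarrow> bool" where
  "Cdone u f l j \<longleftrightarrow> (\<forall>j'<j. f (int j') = (if Cov u j' l then 1 else 0))"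

definition Sdone :: "int list \<Rightarrow> (int \<Rightarrow> int) \<Rightarrow> nat \<Rightarrow> nat \<Rightarrow> bool" where
  "Sdone u f l t \<longleftrightarrow> (\<forall>i. 1 \<le> i \<longrightarrow> i \<le> length u \<longrightarrow> f (int i) = int (Sv u i (if i < t then l else l - 1)))"

definition I4in :: "int list \<Rightarrow> nat \<Rightarrow> nat \<Rightarrow> nat \<Rightarrow> nat \<Rightarrow> state \<Rightarrow> bool" where
  "I4in u l j c mm s \<longleftrightarrow> Q4 u s \<and> vars s ''l'' = int l \<and> vars s ''j'' = int j \<and> vars s ''jW'' = int j * Wd u \<and>
     vars s ''cur'' = int (Mx u l mm) \<and> Cdone u (arrs s ''C'') l c \<and> Sdone u (arrs s ''Seed'') l (j + l)"

lemma B1_HT: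
  assumes jl: "j + l \<le> length u" and l0: "0 < l"
  shows "HT (I4in u l j j j) B1 (I4in u l j (Suc j) j) 5"
proof (rule HT_lf)
  show "lf B1" by (simp add: B1_def)
  show "tmax B1 \<le> 5" by (simp add: B1_def)
next
  fix s assume I: "I4in u l j j j s"
  have vj: "vars s ''j'' = int j" and vjW: "vars s ''jW'' = int j * Wd u" and vl: "vars s ''l'' = int l"
    and Rt: "Ttab u (RMm u) (arrs s ''R'')" and Pt: "Ptab u (arrs s ''P'')" and Cd: "Cdone u (arrs s ''C'') l j"
    using I unfolding I4in_def Q4_def by auto
  define P0 where "P0 = Pk u j l j"
  have ixe: "int j * Wd u + int l = ix u j l" by (simp add: ix_def)
  have vP: "arrs s ''P'' (int j * Wd u + int l) = int P0" using Pt jl unfolding Ptab_def ixe P0_def by simp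
  have vR: "arrs s ''R'' (int j * Wd u + int l) = int (RMm u j l)" using Rt jl unfolding Ttab_def ixe by simp
  have crec: "Cov u j l \<longleftrightarrow> (j = 0 \<or> j + l \<le> RMm u j l) \<or> (0 < P0 \<and> j \<le> P0 - 1 + l \<and> Cov u (P0 - 1) l)"
    using Cov_rec2[OF jl l0] Zc_num[OF l0, of u j] unfolding P0_def by simp
  have eC: "arrs (ex B1 s) ''C'' = (arrs s ''C'')(int j := (if Cov u j l then 1 else 0))"
  proof (cases "j = 0 \<or> j + l \<le> RMm u j l")
    case True
    then have "Cov u j l" using crec by simp
    then show ?thesis unfolding B1_def using True vj vjW vl vP vR by auto
  next
    case False
    then have cv: "Cov u j l \<longleftrightarrow> (0 < P0 \<and> j \<le> P0 - 1 + l \<and> Cov u (P0 - 1) l)" using crec by simp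
    have c3: "(0 < int P0 \<and> int j < int P0 + int l \<and> arrs s ''C'' (int P0 - 1) = 1) \<longleftrightarrow> Cov u j l"
    proof (cases "0 < P0")
      case True
      have "P0 - 1 < j" using Pk_pos[of u j l j] True unfolding P0_def by auto
      then have "arrs s ''C'' (int (P0 - 1)) = (if Cov u (P0 - 1) l then 1 else 0)" using Cd unfolding Cdone_def by simp
      moreover have "int (P0 - 1) = int P0 - 1" using True by simp
      ultimately show ?thesis using cv True by auto
    next
      case False then show ?thesis using cv by simp
    qed
    show ?thesis unfolding B1_def using False vj vjW vl vP vR c3 by auto
  qed
  have eo: "\<And>X. X \<noteq> ''C'' \<Longrightarrow> arrs (ex B1 s) X = arrs s X"
    unfolding B1_def by auto
  have ev: "\<And>x. x \<noteq> ''pv'' \<Longrightarrow> vars (ex B1 s) x = vars s x"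
    unfolding B1_def by auto
  have Cd2: "Cdone u ((arrs s ''C'')(int j := (if Cov u j l then 1 else 0))) l (Suc j)"
    using Cd unfolding Cdone_def by (auto simp: less_Suc_eq)
  show "I4in u l j (Suc j) j (ex B1 s)"
    using I Cd2 unfolding I4in_def Q4_def base_def by (simp add: eC eo ev)
qed

lemma B2_HT:
  assumes jl: "j + l \<le> length u" and l0: "0 < l"
  shows "HT (I4in u l j (Suc j) j) B2 (I4in u l j (Suc j) (Suc j)) 6"
proof (rule HT_lf)
  show "lf B2" by (simp add: B2_def)
  show "tmax B2 \<le> 6" by (simp add: B2_def)
next
  fix s assume I: "I4in u l j (Suc j) j s"
  have vj: "vars s ''j'' = int j" and vjW: "vars s ''jW'' = int j * Wd u" and vl: "vars s ''l'' = int l"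
    and vc: "vars s ''cur'' = int (Mx u l j)"
    and At: "Ttab u (Am u) (arrs s ''A'')" and Cd: "Cdone u (arrs s ''C'') l (Suc j)"
    using I unfolding I4in_def Q4_def by auto
  have ixe: "int j * Wd u + int l = ix u j l" by (simp add: ix_def)
  have vA: "arrs s ''A'' (int j * Wd u + int l) = int (Am u j l)" using At jl unfolding Ttab_def ixe by simp
  have vC: "arrs s ''C'' (int j) = (if Cov u j l then 1 else 0)" using Cd unfolding Cdone_def by simp
  have ecur: "vars (ex B2 s) ''cur'' = int (Mx u l (Suc j))"
    unfolding B2_def using vj vjW vl vc vA vC by (auto simp: max_def)
  have eo: "arrs (ex B2 s) = arrs s"
    unfolding B2_def by auto
  have ev: "\<And>x. x \<noteq> ''tmp'' \<Longrightarrow> x \<noteq> ''cur'' \<Longrightarrow> vars (ex B2 s) x = vars s x"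
    unfolding B2_def by auto
  show "I4in u l j (Suc j) (Suc j) (ex B2 s)"
    using I unfolding I4in_def Q4_def base_def by (simp add: ecur eo ev del: Mx.simps)
qed

lemma B3_HT:
  assumes jl: "j + l \<le> length u" and l0: "0 < l"
  shows "HT (I4in u l j (Suc j) (Suc j)) B3 (I4in u l (Suc j) (Suc j) (Suc j)) 4"
proof (rule HT_lf)
  show "lf B3" by (simp add: B3_def)
  show "tmax B3 \<le> 4" by (simp add: B3_def)
next
  fix s assume I: "I4in u l j (Suc j) (Suc j) s"
  have vj: "vars s ''j'' = int j" and vjW: "vars s ''jW'' = int j * Wd u" and vl: "vars s ''l'' = int l"
    and vc: "vars s ''cur'' = int (Mx u l (Suc j))" and vW: "vars s ''W'' = Wd u"
    and Sd: "Sdone u (arrs s ''Seed'') l (j + l)"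
    using I unfolding I4in_def Q4_def base_def by auto
  define i where "i = j + l"
  have i1: "1 \<le> i" "i \<le> length u" using jl l0 unfolding i_def by auto
  have nl: "\<not> i < j + l" by (simp add: i_def)
  have vS: "arrs s ''Seed'' (int i) = int (Sv u i (l - 1))" using Sd[unfolded Sdone_def, rule_format, OF i1] nl by simp
  have ok: "okm u i l \<longleftrightarrow> i \<le> Mx u l (Suc j)" unfolding i_def by (rule okm_Mx[OF l0])
  have st: "Sv u i l = (if Sv u i (l - 1) \<noteq> 0 then Sv u i (l - 1) else if okm u i l then l else 0)"
    by (rule Sv_step[OF l0])
  have eS: "arrs (ex B3 s) ''Seed'' = (arrs s ''Seed'')(int i := int (Sv u i l))"
  proof (cases "Sv u i (l - 1) = 0 \<and> okm u i l")
    case True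
    then have "Sv u i l = l" using st by simp
    then show ?thesis unfolding B3_def using True vj vl vc vS ok unfolding i_def by auto
  next
    case False
    then have e: "Sv u i l = Sv u i (l - 1)" using st by auto
    have "arrs (ex B3 s) ''Seed'' = arrs s ''Seed''"
      unfolding B3_def using False vj vl vc vS ok unfolding i_def by auto
    then show ?thesis using e vS by auto
  qed
  have eo: "\<And>X. X \<noteq> ''Seed'' \<Longrightarrow> arrs (ex B3 s) X = arrs s X"
    unfolding B3_def by auto
  have ev: "\<And>x. x \<noteq> ''j'' \<Longrightarrow> x \<noteq> ''jW'' \<Longrightarrow> vars (ex B3 s) x = vars s x"
    unfolding B3_def by auto
  have evj: "vars (ex B3 s) ''j'' = vars s ''j'' + 1" "vars (ex B3 s) ''jW'' = vars s ''jW'' + vars s ''W''"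
    unfolding B3_def by auto
  have Sd2: "Sdone u ((arrs s ''Seed'')(int i := int (Sv u i l))) l (Suc j + l)"
    unfolding Sdone_def
  proof (intro allI impI)
    fix i' assume "1 \<le> i'" "i' \<le> length u"
    then show "((arrs s ''Seed'')(int i := int (Sv u i l))) (int i') = int (Sv u i' (if i' < Suc j + l then l else l - 1))"
      using Sd unfolding Sdone_def i_def by (cases "i' = j + l") auto
  qed
  show "I4in u l (Suc j) (Suc j) (Suc j) (ex B3 s)"
    using I Sd2 vj vjW vW unfolding I4in_def Q4_def base_def by (simp add: eS eo ev evj algebra_simps del: Mx.simps)
qed


lemma P4body_HT:
  assumes jl: "j + l \<le> length u" and l0: "0 < l"
  shows "HT (I4in u l j j j) (Seq B1 (Seq B2 B3)) (I4in u l (Suc j) (Suc j) (Suc j)) (5 + (6 + 4))"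
  by (rule HT_seq[OF B1_HT[OF jl l0] HT_seq[OF B2_HT[OF jl l0] B3_HT[OF jl l0]]])

lemma P4in_HT:
  assumes l: "l \<le> length u" and l0: "0 < l"
  shows "HT (I4in u l 0 0 0) P4in (I4in u l (length u - l + 1) (length u - l + 1) (length u - l + 1))
     ((length u + 1) * 16 + 1)"
proof -
  have "HT (\<lambda>s. I4in u l 0 0 0 s) P4in (\<lambda>s. I4in u l (length u - l + 1) (length u - l + 1) (length u - l + 1) s)
     ((length u - l + 1) * ((5 + (6 + 4)) + 1) + 1)"
    unfolding P4in_def
  proof (rule HT_while[where I = "\<lambda>j s. I4in u l j j j s"])
    fix m s assume "m < length u - l + 1" "I4in u l m m m s"
    then show "bval (Less (V ''j'') (Plus (Minus (V ''n'') (V ''l'')) (N 1))) s"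
      using l by (auto simp: I4in_def Q4_def base_def)
  next
    fix s assume "I4in u l (length u - l + 1) (length u - l + 1) (length u - l + 1) s"
    then show "\<not> bval (Less (V ''j'') (Plus (Minus (V ''n'') (V ''l'')) (N 1))) s"
      using l by (auto simp: I4in_def Q4_def base_def)
  next
    fix m assume "m < length u - l + 1"
    then have "m + l \<le> length u" using l by simp
    then show "HT (I4in u l m m m) (Seq B1 (Seq B2 B3)) (I4in u l (Suc m) (Suc m) (Suc m)) (5 + (6 + 4))"
      by (rule P4body_HT[OF _ l0])
  qed
  then show ?thesis by (rule HT_conseq) (use l in auto)
qed

definition I4 :: "int list \<Rightarrow> nat \<Rightarrow> state \<Rightarrow> bool" where
  "I4 u m s \<longleftrightarrow> Q4 u s \<and> vars s ''l'' = int (Suc m) \<and> Sdone u (arrs s ''Seed'') (Suc m) 0"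

lemma P4obody_HT:
  assumes m: "m < length u"
  shows "HT (I4 u m) P4obody (I4 u (Suc m)) (3 + (((length u + 1) * 16 + 1) + 1))"
  unfolding P4obody_def
proof (rule HT_seq)
  show "HT (I4 u m) (Seq (Assign ''j'' (N 0)) (Seq (Assign ''jW'' (N 0)) (Assign ''cur'' (N 0)))) (I4in u (Suc m) 0 0 0) 3"
  proof (rule HT_lf)
    fix s assume I: "I4 u m s"
    have "Sdone u (arrs s ''Seed'') (Suc m) (0 + Suc m)"
      using I unfolding I4_def Sdone_def using Sv_small[of "Suc m" _ u] by auto
    then show "I4in u (Suc m) 0 0 0 (ex (Seq (Assign ''j'' (N 0)) (Seq (Assign ''jW'' (N 0)) (Assign ''cur'' (N 0)))) s)"
      using I unfolding I4_def I4in_def Q4_def base_def Cdone_def by simp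
  qed simp_all
  show "HT (I4in u (Suc m) 0 0 0) (Seq P4in (Assign ''l'' (Plus (V ''l'') (N 1)))) (I4 u (Suc m)) (((length u + 1) * 16 + 1) + 1)"
  proof (rule HT_seq[OF P4in_HT])
    show "Suc m \<le> length u" "0 < Suc m" using m by auto
    show "HT (I4in u (Suc m) (length u - Suc m + 1) (length u - Suc m + 1) (length u - Suc m + 1)) (Assign ''l'' (Plus (V ''l'') (N 1))) (I4 u (Suc m)) 1"
    proof (rule HT_lf)
      fix s assume I: "I4in u (Suc m) (length u - Suc m + 1) (length u - Suc m + 1) (length u - Suc m + 1) s"
      have "Sdone u (arrs s ''Seed'') (Suc (Suc m)) 0"
        using I m unfolding I4in_def Sdone_def by auto
      then show "I4 u (Suc m) (ex (Assign ''l'' (Plus (V ''l'') (N 1))) s)"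
        using I unfolding I4_def I4in_def Q4_def base_def by simp
    qed simp_all
  qed
qed

definition Post4 :: "int list \<Rightarrow> state \<Rightarrow> bool" where
  "Post4 u s \<longleftrightarrow> (\<forall>i. 1 \<le> i \<and> i \<le> length u \<longrightarrow> arrs s ''Seed'' (int i) = int (seed_array u i))"

lemma P4_HT: "HT (Post3 u) P4 (Post4 u) (1 + (length u * ((3 + (((length u + 1) * 16 + 1) + 1)) + 1) + 1))"
  unfolding P4_def
proof (rule HT_seq)
  show "HT (Post3 u) (Assign ''l'' (N 1)) (I4 u 0) 1"
  proof (rule HT_lf)
    fix s assume "Post3 u s"
    then show "I4 u 0 (ex (Assign ''l'' (N 1)) s)"
      by (auto simp: Post3_def Q3_def I4_def Q4_def base_def zer_def Sdone_def Sv_0)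
  qed simp_all
  have "HT (I4 u 0) (While (Less (V ''l'') (Plus (V ''n'') (N 1))) P4obody) (I4 u (length u))
     (length u * ((3 + (((length u + 1) * 16 + 1) + 1)) + 1) + 1)"
  proof (rule HT_while)
    fix m s assume "m < length u" "I4 u m s" then show "bval (Less (V ''l'') (Plus (V ''n'') (N 1))) s"
      by (auto simp: I4_def Q4_def base_def)
  next
    fix s assume "I4 u (length u) s" then show "\<not> bval (Less (V ''l'') (Plus (V ''n'') (N 1))) s"
      by (auto simp: I4_def Q4_def base_def)
  next
    fix m assume "m < length u" then show "HT (I4 u m) P4obody (I4 u (Suc m)) (3 + (((length u + 1) * 16 + 1) + 1))"
      by (rule P4obody_HT)
  qed
  then show "HT (I4 u 0) (While (Less (V ''l'') (Plus (V ''n'') (N 1))) P4obody) (Post4 u)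
     (length u * ((3 + (((length u + 1) * 16 + 1) + 1)) + 1) + 1)"
  proof (rule HT_conseq)
    fix s assume I: "I4 u (length u) s"
    show "Post4 u s" unfolding Post4_def
    proof (intro allI impI)
      fix i assume i: "1 \<le> i \<and> i \<le> length u"
      have "arrs s ''Seed'' (int i) = int (Sv u i (length u))" using I i unfolding I4_def Sdone_def by auto
      also have "Sv u i (length u) = seed_array u i" using Sv_full[of i "length u" u] seed_array_char[of i u] i by simp
      finally show "arrs s ''Seed'' (int i) = int (seed_array u i)" by simp
    qed
  qed auto
qed

definition PROG :: com where "PROG = Seq P0 (Seq P1 (Seq P2 (Seq P3 P4)))"

lemma PROG_HT: "HT (\<lambda>s. s = init_state u) PROG (Post4 u) (200 * (length u + 1)^2)"
proof -
  have h: "HT (\<lambda>s. s = init_state u) PROG (Post4 u)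
    ((3 + (length u * 3 + 1)) + ((2 + ((length u + 1) * ((1 + (((length u + 1) * (4 + 1) + 1) + 2)) + 1) + 1)) +
     ((2 + ((length u + 1) * ((2 + (((length u + 1) * 13 + 1) + 2)) + 1) + 1)) +
     ((2 + ((length u + 1) * ((2 + ((length u * (3 + 1) + 1) + (1 + (((length u + 1) * (3 + 1) + 1) + 2)))) + 1) + 1)) +
      (1 + (length u * ((3 + (((length u + 1) * 16 + 1) + 1)) + 1) + 1))))))"
    unfolding PROG_def by (rule HT_seq[OF P0_HT HT_seq[OF P1_HT HT_seq[OF P2_HT HT_seq[OF P3_HT P4_HT]]]])
  show ?thesis
  proof (rule HT_conseq[OF h])
    show "(3 + (length u * 3 + 1)) + ((2 + ((length u + 1) * ((1 + (((length u + 1) * (4 + 1) + 1) + 2)) + 1) + 1)) +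
     ((2 + ((length u + 1) * ((2 + (((length u + 1) * 13 + 1) + 2)) + 1) + 1)) +
     ((2 + ((length u + 1) * ((2 + ((length u * (3 + 1) + 1) + (1 + (((length u + 1) * (3 + 1) + 1) + 2)))) + 1) + 1)) +
      (1 + (length u * ((3 + (((length u + 1) * 16 + 1) + 1)) + 1) + 1))))) \<le> 200 * (length u + 1)^2"
      by (simp add: power2_eq_square algebra_simps)
  qed auto
qed

theorem theorem5:
  "\<exists>(P :: com) (c :: nat). \<forall>u :: int list.
     \<exists>t s'. big_step P (init_state u) t s' \<and>
       t \<le> c * (length u + 1)^2 \<and>
       (\<forall>i. 1 \<le> i \<and> i \<le> length u \<longrightarrow> arrs s' ''Seed'' (int i) = int (seed_array u i))"
proof (rule exI[of _ PROG], rule exI[of _ 200], rule allI)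
  fix u :: "int list"
  from PROG_HT[of u] show "\<exists>t s'. big_step PROG (init_state u) t s' \<and> t \<le> 200 * (length u + 1)^2 \<and>
       (\<forall>i. 1 \<le> i \<and> i \<le> length u \<longrightarrow> arrs s' ''Seed'' (int i) = int (seed_array u i))"
    unfolding HT_def Post4_def by auto
qed


end
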